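(* Let $\alpha,\beta\in[0,r]\cap A$ with $\alpha<\beta$, $I=(\alpha,\beta)$, and $x\in\mathbf F_I$ with $\mathrm{fix}(x)\cap I\cap A=\varnothing$. Then the centralizer of $x$ in $\mathbf F_I$ is cyclic.
   Context: Maps act on the right. Fix real $r>0$, a subgroup $\Lambda\neq\{1\}$ of $\mathbb R^*_+$, and an additive subgroup $A\subseteq\mathbb R$ with $r\in A$ and $\lambda A\subseteq A$ for $\lambda\in\Lambda$. $\mathbf F=\mathbf F(r,\Lambda,A)$ is the group of homeomorphisms $x\colon[0,r)\to[0,r)$ that are piecewise affine with finitely many breakpoints, all slopes in $\Lambda$, and all breakpoints and their images in $A$. For a permutation $x$, $\mathrm{fix}(x)$ is its fixed point set and $\mathrm{supp}(x)$ its complement. For $S\subseteq[0,r)$, $\mathbf F_S=\{x\in\mathbf F\mid\mathrm{supp}(x)\subseteq S\}$. *)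

theory Defs
  imports "HOL-Analysis.Analysis"
begin

definition std_params :: "real \<Rightarrow> real set \<Rightarrow> real set \<Rightarrow> bool" where
  "std_params r L A \<longleftrightarrow>
     r > 0 \<and>
     L \<subseteq> {0<..} \<and> 1 \<in> L \<and> (\<forall>a\<in>L. \<forall>b\<in>L. a * b \<in> L) \<and> (\<forall>a\<in>L. inverse a \<in> L) \<and>
     L \<noteq> {1} \<and>
     0 \<in> A \<and> (\<forall>a\<in>A. \<forall>b\<in>A. a + b \<in> A) \<and> (\<forall>a\<in>A. - a \<in> A) \<and>
     r \<in> A \<and> (\<forall>l\<in>L. \<forall>a\<in>A. l * a \<in> A)"

text \<open>Elements of F(r,L,A): homeomorphisms of [0,r), extended by the identity
  outside [0,r), piecewise affine with finitely many breakpoints, all slopes in L,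
  breakpoints and their images in A.  The breakpoints are encoded by a finite
  subdivision 0 = a 0 < a 1 < ... < a n = r of points of A (with images in A)
  such that x is affine with slope in L on each [a i, a (i+1)).\<close>
definition PLF :: "real \<Rightarrow> real set \<Rightarrow> real set \<Rightarrow> (real \<Rightarrow> real) set" where
  "PLF r L A = {x. (\<exists>g. homeomorphism {0..<r} {0..<r} x g) \<and>
      (\<forall>t. t \<notin> {0..<r} \<longrightarrow> x t = t) \<and>
      (\<exists>(n::nat) a. a 0 = 0 \<and> a n = r \<and> (\<forall>i<n. a i < a (Suc i)) \<and>
         (\<forall>i<n. a i \<in> A \<and> x (a i) \<in> A \<and>
            (\<exists>l\<in>L. \<exists>c. \<forall>t\<in>{a i..<a (Suc i)}. x t = l * t + c)))}"

definition fixset :: "real \<Rightarrow> (real \<Rightarrow> real) \<Rightarrow> real set" where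
  "fixset r x = {t\<in>{0..<r}. x t = t}"

definition supp :: "real \<Rightarrow> (real \<Rightarrow> real) \<Rightarrow> real set" where
  "supp r x = {t\<in>{0..<r}. x t \<noteq> t}"

definition PLF_on :: "real \<Rightarrow> real set \<Rightarrow> real set \<Rightarrow> real set \<Rightarrow> (real \<Rightarrow> real) set" where
  "PLF_on r L A S = {x\<in>PLF r L A. supp r x \<subseteq> S}"

definition fpow :: "(real \<Rightarrow> real) \<Rightarrow> int \<Rightarrow> (real \<Rightarrow> real)" where
  "fpow g k = (if 0 \<le> k then g ^^ nat k else (inv g) ^^ nat (- k))"

definition centralizer_in :: "(real \<Rightarrow> real) set \<Rightarrow> (real \<Rightarrow> real) \<Rightarrow> (real \<Rightarrow> real) set" where
  "centralizer_in G x = {y\<in>G. y \<circ> x = x \<circ> y}"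

definition cyclic_fun_group :: "(real \<Rightarrow> real) set \<Rightarrow> bool" where
  "cyclic_fun_group C \<longleftrightarrow> (\<exists>g. C = range (fpow g))"

end

theory Submission
  imports Defs
begin

locale plf =
  fixes r :: real and L A :: "real set"
  assumes std: "std_params r L A"
begin

lemma r_pos: "r > 0" using std by (simp add: std_params_def)
lemma L_pos: "l \<in> L \<Longrightarrow> l > 0" using std by (auto simp add: std_params_def)
lemma L_one: "1 \<in> L" using std by (simp add: std_params_def)
lemma L_mult: "a \<in> L \<Longrightarrow> b \<in> L \<Longrightarrow> a * b \<in> L" using std by (simp add: std_params_def)
lemma L_inv: "a \<in> L \<Longrightarrow> inverse a \<in> L" using std by (simp add: std_params_def)
lemma L_nontriv: "\<exists>l\<in>L. l \<noteq> 1" using std L_one unfolding std_params_def by blast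
lemma A_zero: "0 \<in> A" using std by (simp add: std_params_def)
lemma A_add: "a \<in> A \<Longrightarrow> b \<in> A \<Longrightarrow> a + b \<in> A" using std by (simp add: std_params_def)
lemma A_uminus: "a \<in> A \<Longrightarrow> - a \<in> A" using std by (simp add: std_params_def)
lemma A_diff: assumes "a \<in> A" "b \<in> A" shows "a - b \<in> A"
  using A_add[OF assms(1) A_uminus[OF assms(2)]] by simp
lemma A_r: "r \<in> A" using std by (simp add: std_params_def)
lemma A_Lmult: "l \<in> L \<Longrightarrow> a \<in> A \<Longrightarrow> l * a \<in> A" using std by (simp add: std_params_def)
lemma L_div: "a \<in> L \<Longrightarrow> b \<in> L \<Longrightarrow> a / b \<in> L"
  using L_mult L_inv by (simp add: divide_inverse)

lemma L_pow: "l \<in> L \<Longrightarrow> l ^ n \<in> L"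
  by (induction n) (auto simp: L_one L_mult)

lemma A_nat_mult: "h \<in> A \<Longrightarrow> real n * h \<in> A"
  by (induction n) (auto simp: A_zero A_add distrib_right)

lemma A_int_mult: assumes h: "h \<in> A" shows "real_of_int k * h \<in> A"
proof (cases "k \<ge> 0")
  case True
  then have "real_of_int k = real (nat k)" by simp
  then show ?thesis using A_nat_mult[OF h] by (metis)
next
  case False
  have "real_of_int k * h = - (real (nat (-k)) * h)" using False by simp
  then show ?thesis using A_nat_mult[OF h] A_uminus by metis
qed

lemma A_dense: assumes "a < b" shows "\<exists>t\<in>A. a < t \<and> t < b"
proof -
  obtain l where l: "l \<in> L" "l \<noteq> 1" using L_nontriv by blast
  define q where "q = (if l < 1 then l else inverse l)"
  have q: "q \<in> L" "0 < q" "q < 1"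
    using l L_inv L_pos[of l] by (auto simp: q_def inverse_less_1_iff)
  obtain n where n: "q ^ n < (b - a) / r" using real_arch_pow_inv[of "(b-a)/r" q] q assms r_pos by auto
  define h where "h = q ^ n * r"
  have hA: "h \<in> A" unfolding h_def using A_Lmult L_pow q(1) A_r by blast
  have hpos: "h > 0" unfolding h_def using q r_pos by simp
  have hlt: "h < b - a" using n r_pos unfolding h_def by (simp add: field_simps)
  define k where "k = \<lfloor>a / h\<rfloor> + 1"
  have "real_of_int k * h \<in> A" using A_int_mult hA by blast
  moreover have "a < real_of_int k * h"
  proof -
    have "a / h < real_of_int k" unfolding k_def by linarith
    then show ?thesis using hpos by (simp add: field_simps)
  qed
  moreover have "real_of_int k * h < b"
  proof -
    have "real_of_int k \<le> a / h + 1" unfolding k_def by linarith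
    then have "real_of_int k * h \<le> (a/h + 1) * h" using hpos by (simp add: mult_right_mono)
    also have "\<dots> = a + h" using hpos by (simp add: field_simps)
    finally show ?thesis using hlt by simp
  qed
  ultimately show ?thesis by blast
qed

end

context plf begin

definition aff :: "(real \<Rightarrow> real) \<Rightarrow> real set \<Rightarrow> bool" where
  "aff f S \<longleftrightarrow> (\<exists>l\<in>L. \<exists>c. \<forall>t\<in>S. f t = l * t + c)"

definition pcs :: "real set \<Rightarrow> (real \<Rightarrow> real) \<Rightarrow> bool" where
  "pcs S f \<longleftrightarrow> (\<forall>u v. 0 \<le> u \<longrightarrow> u < v \<longrightarrow> v \<le> r \<longrightarrow> (\<forall>s\<in>S. s \<le> u \<or> v \<le> s) \<longrightarrow> aff f {u..<v})"

definition Q :: "(real \<Rightarrow> real) \<Rightarrow> bool" where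
  "Q f \<longleftrightarrow> (\<exists>g. homeomorphism {0..<r} {0..<r} f g) \<and> (\<forall>t. t \<notin> {0..<r} \<longrightarrow> f t = t) \<and>
     (\<exists>S. finite S \<and> S \<subseteq> A \<inter> {0..<r} \<and> 0 \<in> S \<and> f ` S \<subseteq> A \<and> pcs S f)"

lemma seq_mono:
  fixes a :: "nat \<Rightarrow> real"
  assumes "\<forall>i<n. a i < a (Suc i)" "i < j" "j \<le> n"
  shows "a i < a j"
  using assms(2,3)
proof (induction j)
  case 0 then show ?case by simp
next
  case (Suc j)
  show ?case
  proof (cases "i = j")
    case True then show ?thesis using assms(1) Suc by simp
  next
    case False
    then have "a i < a j" using Suc by simp
    also have "a j < a (Suc j)" using assms(1) Suc by simp
    finally show ?thesis .
  qed
qed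

lemma PLF_Q: assumes "f \<in> PLF r L A" shows "Q f"
proof -
  from assms obtain n a where h: "\<exists>g. homeomorphism {0..<r} {0..<r} f g"
    "\<forall>t. t \<notin> {0..<r} \<longrightarrow> f t = t" "a 0 = 0" "a n = r" "\<forall>i<n. a i < a (Suc i)"
    "\<forall>i<n. a i \<in> A \<and> f (a i) \<in> A \<and> (\<exists>l\<in>L. \<exists>c. \<forall>t\<in>{a i..<a (Suc i)}. f t = l * t + c)"
    unfolding PLF_def by blast
  have n0: "n > 0" using h(3,4) r_pos by (cases n) auto
  have mono: "i < j \<Longrightarrow> j \<le> n \<Longrightarrow> a i < a j" for i j using seq_mono[OF h(5)] by blast
  have ar: "i < n \<Longrightarrow> 0 \<le> a i \<and> a i < r" for i
    using mono[of 0 i] mono[of i n] h(3,4) by (cases "i = 0") auto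
  define S where "S = a ` {..<n}"
  have "finite S" unfolding S_def by simp
  moreover have "S \<subseteq> A \<inter> {0..<r}" unfolding S_def using h(6) ar by auto
  moreover have "0 \<in> S" unfolding S_def using n0 h(3) by force
  moreover have "f ` S \<subseteq> A" unfolding S_def using h(6) by auto
  moreover have "pcs S f" unfolding pcs_def
  proof (intro allI impI)
    fix u v assume uv: "0 \<le> u" "u < v" "v \<le> r" "\<forall>s\<in>S. s \<le> u \<or> v \<le> s"
    define I where "I = {i. i < n \<and> a i \<le> u}"
    have "0 \<in> I" unfolding I_def using n0 h(3) uv by simp
    have fI: "finite I" unfolding I_def by simp
    define i where "i = Max I"
    have iI: "i \<in> I" unfolding i_def using fI \<open>0 \<in> I\<close> Max_in by blast
    have imax: "j \<in> I \<Longrightarrow> j \<le> i" for j unfolding i_def using fI Max_ge by blast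
    have lo: "a i \<le> u" "i < n" using iI unfolding I_def by auto
    have hi: "v \<le> a (Suc i)"
    proof (cases "Suc i < n")
      case True
      then have "Suc i \<notin> I" using imax by fastforce
      then have "a (Suc i) > u" using True unfolding I_def by auto
      moreover have "a (Suc i) \<in> S" unfolding S_def using True by simp
      ultimately show ?thesis using uv(4) by force
    next
      case False
      then have "Suc i = n" using lo by simp
      then show ?thesis using h(4) uv by simp
    qed
    obtain l c where lc: "l \<in> L" "\<forall>t\<in>{a i..<a (Suc i)}. f t = l * t + c" using h(6) lo by blast
    show "aff f {u..<v}" unfolding aff_def using lc lo hi by force
  qed
  ultimately show ?thesis unfolding Q_def using h(1,2) by blast
qed

lemma Q_PLF: assumes "Q f" shows "f \<in> PLF r L A"
proof -
  from assms obtain S where h: "\<exists>g. homeomorphism {0..<r} {0..<r} f g"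
    "\<forall>t. t \<notin> {0..<r} \<longrightarrow> f t = t" "finite S" "S \<subseteq> A \<inter> {0..<r}" "0 \<in> S" "f ` S \<subseteq> A" "pcs S f"
    unfolding Q_def by blast
  define xs where "xs = sorted_list_of_set S"
  define n where "n = length xs"
  have setxs: "set xs = S" unfolding xs_def using h(3) by simp
  have sxs: "sorted_wrt (<) xs" unfolding xs_def using strict_sorted_list_of_set by blast
  have sxs': "sorted xs" unfolding xs_def by simp
  have n0: "n > 0" unfolding n_def using setxs h(5) by (cases xs) auto
  define a where "a = (\<lambda>i. if i < n then xs ! i else r)"
  have inS: "i < n \<Longrightarrow> xs ! i \<in> S" for i using setxs n_def by auto
  have a0: "a 0 = 0"
  proof -
    obtain j where j: "j < n" "xs ! j = 0" using h(5) setxs n_def by (metis in_set_conv_nth)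
    have "xs ! 0 \<le> xs ! j" using sorted_nth_mono[OF sxs', of 0 j] j n_def by simp
    moreover have "xs ! 0 \<ge> 0" using inS[of 0] n0 h(4) by auto
    ultimately show ?thesis unfolding a_def using n0 j by simp
  qed
  have an: "a n = r" unfolding a_def by simp
  have asc: "\<forall>i<n. a i < a (Suc i)"
  proof (intro allI impI)
    fix i assume i: "i < n"
    show "a i < a (Suc i)"
    proof (cases "Suc i < n")
      case True then show ?thesis unfolding a_def using sorted_wrt_nth_less[OF sxs, of i "Suc i"] n_def i by simp
    next
      case False then show ?thesis unfolding a_def using inS[OF i] h(4) i by auto
    qed
  qed
  have pieces: "\<forall>i<n. a i \<in> A \<and> f (a i) \<in> A \<and> (\<exists>l\<in>L. \<exists>c. \<forall>t\<in>{a i..<a (Suc i)}. f t = l * t + c)"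
  proof (intro allI impI conjI)
    fix i assume i: "i < n"
    show "a i \<in> A" "f (a i) \<in> A" unfolding a_def using inS[OF i] i h(4,6) by auto
    have u0: "0 \<le> a i" unfolding a_def using inS[OF i] i h(4) by auto
    have vr: "a (Suc i) \<le> r" unfolding a_def using h(4) inS[of "Suc i"] by auto
    have gap: "\<forall>s\<in>S. s \<le> a i \<or> a (Suc i) \<le> s"
    proof
      fix s assume "s \<in> S"
      then obtain j where j: "j < n" "s = xs ! j" using setxs n_def by (metis in_set_conv_nth)
      show "s \<le> a i \<or> a (Suc i) \<le> s"
      proof (cases "j \<le> i")
        case True then have "s \<le> xs ! i" using sorted_nth_mono[OF sxs', of j i] j i n_def by simp
        then show ?thesis unfolding a_def using i by simp
      next
        case False
        then have "Suc i < n" "Suc i \<le> j" using j by auto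
        then have "xs ! (Suc i) \<le> s" using sorted_nth_mono[OF sxs', of "Suc i" j] j n_def by simp
        then show ?thesis unfolding a_def using \<open>Suc i < n\<close> by simp
      qed
    qed
    have "aff f {a i..<a (Suc i)}" using h(7) u0 vr gap asc i unfolding pcs_def by blast
    then show "\<exists>l\<in>L. \<exists>c. \<forall>t\<in>{a i..<a (Suc i)}. f t = l * t + c" unfolding aff_def by blast
  qed
  show ?thesis unfolding PLF_def using h(1,2) a0 an asc pieces by blast
qed

lemma PLF_iff_Q: "f \<in> PLF r L A \<longleftrightarrow> Q f" using PLF_Q Q_PLF by blast

end

context plf begin

lemma piece_right:
  assumes "finite S" "0 \<in> S" "S \<subseteq> {0..<r}" "0 \<le> t" "t < r"
  shows "\<exists>u v. u \<in> S \<and> u \<le> t \<and> t < v \<and> v \<le> r \<and> (\<forall>s\<in>S. s \<le> u \<or> v \<le> s)"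
proof -
  define U where "U = {s\<in>S. s \<le> t}"
  define V where "V = insert r {s\<in>S. t < s}"
  have fU: "finite U" "U \<noteq> {}" unfolding U_def using assms by auto
  have fV: "finite V" "V \<noteq> {}" unfolding V_def using assms by auto
  define u where "u = Max U"
  define v where "v = Min V"
  have uU: "u \<in> U" unfolding u_def using fU Max_in by blast
  have vV: "v \<in> V" unfolding v_def using fV Min_in by blast
  have "u \<in> S" "u \<le> t" using uU unfolding U_def by auto
  moreover have "t < v" "v \<le> r" using vV fV assms(5) unfolding V_def v_def by auto
  moreover have "\<forall>s\<in>S. s \<le> u \<or> v \<le> s"
  proof
    fix s assume s: "s \<in> S"
    show "s \<le> u \<or> v \<le> s"
    proof (cases "s \<le> t")
      case True then have "s \<in> U" unfolding U_def using s by simp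
      then show ?thesis unfolding u_def using fU by simp
    next
      case False then have "s \<in> V" unfolding V_def using s by simp
      then show ?thesis unfolding v_def using fV by simp
    qed
  qed
  ultimately show ?thesis by blast
qed

lemma piece_left:
  assumes "finite S" "0 \<in> S" "S \<subseteq> {0..<r}" "0 < t"
  shows "\<exists>u. u \<in> S \<and> u < t \<and> (\<forall>s\<in>S. s \<le> u \<or> t \<le> s)"
proof -
  define U where "U = {s\<in>S. s < t}"
  have fU: "finite U" "U \<noteq> {}" unfolding U_def using assms by auto
  define u where "u = Max U"
  have uU: "u \<in> U" unfolding u_def using fU Max_in by blast
  have "\<forall>s\<in>S. s \<le> u \<or> t \<le> s"
  proof
    fix s assume s: "s \<in> S"
    show "s \<le> u \<or> t \<le> s"
    proof (cases "s < t")
      case True then have "s \<in> U" unfolding U_def using s by simp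
      then show ?thesis unfolding u_def using fU by simp
    qed simp
  qed
  then show ?thesis using uU unfolding U_def by blast
qed

lemma Q_data:
  assumes "Q f"
  obtains g S where "homeomorphism {0..<r} {0..<r} f g" "\<forall>t. t \<notin> {0..<r} \<longrightarrow> f t = t"
    "finite S" "S \<subseteq> A \<inter> {0..<r}" "0 \<in> S" "f ` S \<subseteq> A" "pcs S f"
  using assms unfolding Q_def by blast

lemma Q_piece:
  assumes "Q f" "0 \<le> t" "t < r"
  shows "\<exists>u v l c. u \<in> A \<and> f u \<in> A \<and> u \<le> t \<and> t < v \<and> v \<le> r \<and> l \<in> L \<and>
     (\<forall>w\<in>{u..<v}. f w = l * w + c) \<and> (t \<notin> A \<longrightarrow> u < t)"
proof -
  obtain g S where h: "homeomorphism {0..<r} {0..<r} f g" "\<forall>t. t \<notin> {0..<r} \<longrightarrow> f t = t"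
    "finite S" "S \<subseteq> A \<inter> {0..<r}" "0 \<in> S" "f ` S \<subseteq> A" "pcs S f" using Q_data[OF assms(1)] by blast
  obtain u v where uv: "u \<in> S" "u \<le> t" "t < v" "v \<le> r" "\<forall>s\<in>S. s \<le> u \<or> v \<le> s"
    using piece_right[OF h(3,5) _ assms(2,3)] h(4) by blast
  have "aff f {u..<v}" using h(7) uv h(4) unfolding pcs_def by force
  then obtain l c where "l \<in> L" "\<forall>w\<in>{u..<v}. f w = l * w + c" unfolding aff_def by blast
  moreover have "t \<notin> A \<longrightarrow> u < t" using uv h(4) by (auto simp: order_le_less)
  ultimately show ?thesis using uv h(4,6) by blast
qed

lemma Q_right_germ:
  assumes "Q f" "0 \<le> t" "t < r"
  shows "\<exists>d>0. \<exists>l\<in>L. \<exists>c. \<forall>w\<in>{t..t+d}. f w = l * w + c"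
proof -
  obtain u v l c where h: "u \<le> t" "t < v" "l \<in> L" "\<forall>w\<in>{u..<v}. f w = l * w + c"
    using Q_piece[OF assms] by blast
  have "{t..t+(v-t)/2} \<subseteq> {u..<v}" using h(1,2) by (auto simp: field_simps)
  then have "\<forall>w\<in>{t..t+(v-t)/2}. f w = l * w + c" using h(4) by blast
  moreover have "(v-t)/2 > 0" using h by simp
  ultimately show ?thesis using h(3) by blast
qed

lemma Q_twosided_germ:
  assumes "Q f" "0 < t" "t < r" "t \<notin> A"
  shows "\<exists>d>0. \<exists>l\<in>L. \<exists>c. \<forall>w\<in>{t-d..t+d}. f w = l * w + c"
proof -
  obtain u v l c where h: "u < t" "t < v" "l \<in> L" "\<forall>w\<in>{u..<v}. f w = l * w + c"
    using Q_piece[OF assms(1) _ assms(3)] assms(2,4) by force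
  define d where "d = min (t-u) (v-t)/2"
  have "{t-d..t+d} \<subseteq> {u..<v}" using h(1,2) unfolding d_def by (auto simp: min_def field_simps)
  then have "\<forall>w\<in>{t-d..t+d}. f w = l * w + c" using h(4) by blast
  moreover have "d > 0" using h unfolding d_def by simp
  ultimately show ?thesis using h(3) by blast
qed

lemma Q_basic:
  assumes "Q f"
  shows "continuous_on {0..<r} f" "\<And>t. t \<in> {0..<r} \<Longrightarrow> f t \<in> {0..<r}"
    "\<And>z. z \<in> {0..<r} \<Longrightarrow> \<exists>w\<in>{0..<r}. f w = z" "\<And>t. t \<notin> {0..<r} \<Longrightarrow> f t = t"
    "inj_on f {0..<r}"
proof -
  obtain g S where h: "homeomorphism {0..<r} {0..<r} f g" "\<forall>t. t \<notin> {0..<r} \<longrightarrow> f t = t"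
    using Q_data[OF assms] by metis
  have H1: "\<forall>x\<in>{0..<r}. g (f x) = x" using h(1) unfolding homeomorphism_def by blast
  have H2: "f ` {0..<r} = {0..<r}" using h(1) unfolding homeomorphism_def by blast
  have H3: "continuous_on {0..<r} f" using h(1) unfolding homeomorphism_def by blast
  note H = H1 H2 H3
  show "continuous_on {0..<r} f" using H(3) .
  show "\<And>t. t \<in> {0..<r} \<Longrightarrow> f t \<in> {0..<r}" using H(2) by (metis imageI)
  show "\<And>z. z \<in> {0..<r} \<Longrightarrow> \<exists>w\<in>{0..<r}. f w = z" using H(2) by (metis imageE)
  show "\<And>t. t \<notin> {0..<r} \<Longrightarrow> f t = t" using h(2) by blast
  show "inj_on f {0..<r}" using H(1) by (intro inj_on_inverseI[of _ g]) auto
qed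

lemma Q_mono0:
  assumes "Q f" "0 \<le> u" "u < v" "v < r"
  shows "f u < f v"
proof -
  obtain d l c where g: "d > 0" "l \<in> L" "\<forall>w\<in>{u..u+d}. f w = l * w + c"
    using Q_right_germ[OF assms(1,2)] assms by force
  define x where "x = min (u + d) ((u+v)/2)"
  have x: "u < x" "x < v" unfolding x_def using g assms by (auto simp: min_def)
  have sub: "{u..v} \<subseteq> {0..<r}" using assms by auto
  have "continuous_on {u..v} f" by (rule continuous_on_subset[OF Q_basic(1)[OF assms(1)] sub])
  moreover have "inj_on f {u..v}" by (rule inj_on_subset[OF Q_basic(5)[OF assms(1)] sub])
  ultimately have "(f u < f x \<and> f x < f v) \<or> (f v < f x \<and> f x < f u)"
    using continuous_inj_imp_mono[OF x] by blast
  moreover have "f u < f x" using g x L_pos[of l] unfolding x_def by auto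
  ultimately show ?thesis by auto
qed

lemma Q_mono:
  assumes "Q f" "u < v"
  shows "f u < f v"
proof -
  note b = Q_basic[OF assms(1)]
  show ?thesis
  proof (cases "u < 0")
    case True
    then have fu: "f u = u" using b(4) by simp
    show ?thesis
    proof (cases "v < 0 \<or> v \<ge> r")
      case True then show ?thesis using fu b(4) assms by auto
    next
      case False then have "f v \<in> {0..<r}" using b(2) by simp
      then show ?thesis using fu \<open>u < 0\<close> by auto
    qed
  next
    case False
    show ?thesis
    proof (cases "v \<ge> r")
      case True then have fv: "f v = v" using b(4) by simp
      show ?thesis
      proof (cases "u < r")
        case True then have "f u < r" using b(2) False by auto
        then show ?thesis using fv \<open>v \<ge> r\<close> by simp
      next
        case False2: False
        then have "f u = u" using b(4) by simp
        then show ?thesis using fv assms(2) by simp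
      qed
    next
      case False2: False
      then show ?thesis using Q_mono0[OF assms(1)] False assms(2) by simp
    qed
  qed
qed

lemma Q_zero: assumes "Q f" shows "f 0 = 0"
proof -
  obtain w where w: "w \<in> {0..<r}" "f w = 0" using Q_basic(3)[OF assms] r_pos by force
  show ?thesis
  proof (cases "w = 0")
    case False
    then have "0 < w" using w by simp
    then have "f 0 < f w" using Q_mono[OF assms] by blast
    moreover have "f 0 \<ge> 0" using Q_basic(2)[OF assms] r_pos by force
    ultimately show ?thesis using w by simp
  qed (use w in simp)
qed

lemma Q_le_r: assumes "Q f" "t \<le> r" shows "f t \<le> r"
proof (cases "t = r")
  case True then show ?thesis using Q_basic(4)[OF assms(1)] by simp
next
  case False
  then have "f t < f r" using Q_mono[OF assms(1)] assms by simp
  then show ?thesis using Q_basic(4)[OF assms(1)] by simp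
qed

lemma Q_no_jump:
  assumes "Q f" "0 \<le> u" "u < t" "t \<le> r" "l > 0" "\<forall>w\<in>{u..<t}. f w = l * w + c"
  shows "f t = l * t + c"
proof -
  note b = Q_basic[OF assms(1)]
  have fu: "f u = l * u + c" using assms by simp
  have fu0: "f u \<ge> 0" using b(2) assms r_pos by force
  have ge: "f t \<ge> l * t + c"
  proof (rule ccontr)
    assume "\<not> ?thesis"
    define e where "e = l * t + c - f t"
    have e: "e > 0" unfolding e_def using \<open>\<not> _\<close> by simp
    define w where "w = max ((u+t)/2) (t - e / (2*l))"
    have "e/(2*l) > 0" using e assms(5) by simp
    moreover have "u \<le> (u+t)/2" "(u+t)/2 < t" using assms by (auto simp: field_simps)
    ultimately have w: "u \<le> w" "w < t" unfolding w_def by (auto simp: le_max_iff_disj)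
    have "f w = l * w + c" using assms(6) w by simp
    also have "\<dots> \<ge> l * (t - e/(2*l)) + c" using assms(5) unfolding w_def by (simp add: mult_left_mono)
    finally have fw: "f w \<ge> l * (t - e/(2*l)) + c" .
    have eq: "l * (t - e/(2*l)) + c = l * t + c - e/2" using assms(5) by (simp add: field_simps)
    have "f w \<ge> l * t + c - e/2" using fw unfolding eq .
    moreover have "f w < f t" using Q_mono[OF assms(1) w(2)] .
    moreover have "l * t + c - f t > 0" using e unfolding e_def .
    ultimately show False by (simp add: field_simps e_def)
  qed
  have le: "f t \<le> l * t + c"
  proof (rule ccontr)
    assume "\<not> ?thesis"
    define z where "z = (l * t + c + f t) / 2"
    have z1: "l * t + c < z" "z < f t" unfolding z_def using \<open>\<not> _\<close> by auto
    have "l * u + c < l * t + c" using assms by simp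
    then have "z \<ge> 0" using fu fu0 z1 by simp
    moreover have "z < r" using z1 Q_le_r[OF assms(1,4)] by simp
    ultimately obtain w where w: "f w = z" using b(3) by force
    show False
    proof (cases "w \<ge> t")
      case True
      then have "f w \<ge> f t" using Q_mono[OF assms(1)] by (cases "w = t") (auto intro: less_imp_le)
      then show False using w z1 by simp
    next
      case False
      show False
      proof (cases "w \<ge> u")
        case True
        then have "f w = l * w + c" using assms(6) False by simp
        moreover have "l * w < l * t" using False assms(5) by simp
        ultimately show False using w z1 by simp
      next
        case False2: False
        then have "f w < f u" using Q_mono[OF assms(1)] by simp
        then show False using w z1 fu \<open>l * u + c < l * t + c\<close> by simp
      qed
    qed
  qed
  show ?thesis using ge le by simp
qed

lemma Q_left_germ:
  assumes "Q f" "0 < t" "t \<le> r"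
  shows "\<exists>d>0. \<exists>l\<in>L. \<exists>c. \<forall>w\<in>{t-d..t}. f w = l * w + c"
proof -
  obtain g S where h: "homeomorphism {0..<r} {0..<r} f g" "\<forall>t. t \<notin> {0..<r} \<longrightarrow> f t = t"
    "finite S" "S \<subseteq> A \<inter> {0..<r}" "0 \<in> S" "f ` S \<subseteq> A" "pcs S f" using Q_data[OF assms(1)] by blast
  obtain u where u: "u \<in> S" "u < t" "\<forall>s\<in>S. s \<le> u \<or> t \<le> s"
    using piece_left[OF h(3,5) _ assms(2)] h(4) by blast
  have u0: "0 \<le> u" using u h(4) by auto
  have "aff f {u..<t}" using h(7) u u0 assms(3) unfolding pcs_def by blast
  then obtain l c where lc: "l \<in> L" "\<forall>w\<in>{u..<t}. f w = l * w + c" unfolding aff_def by blast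
  have "f t = l * t + c" using Q_no_jump[OF assms(1) u0 u(2) assms(3) L_pos[OF lc(1)] lc(2)] .
  then have "\<forall>w\<in>{u..t}. f w = l * w + c" using lc by (auto simp: order_le_less)
  then show ?thesis by (intro exI[of _ "t - u"]) (use u lc in auto)
qed

lemma Q_A:
  assumes "Q f"
  shows "t \<in> A \<Longrightarrow> f t \<in> A" "f t \<in> A \<Longrightarrow> t \<in> A"
proof -
  have both: "t \<in> A \<longleftrightarrow> f t \<in> A"
  proof (cases "t \<in> {0..<r}")
    case False then show ?thesis using Q_basic(4)[OF assms] by simp
  next
    case True
    then obtain u v l c where h: "u \<in> A" "f u \<in> A" "u \<le> t" "t < v" "l \<in> L" "\<forall>w\<in>{u..<v}. f w = l * w + c"
      using Q_piece[OF assms] by force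
    have c: "c = f u - l * u" using h by simp
    have cA: "c \<in> A" unfolding c using A_diff A_Lmult h by blast
    have ft: "f t = l * t + c" using h by simp
    have lp: "l > 0" using L_pos h(5) by simp
    have t_eq: "t = inverse l * (f t - c)" using ft lp by (simp add: field_simps)
    show ?thesis
    proof
      assume "t \<in> A" then show "f t \<in> A" unfolding ft using A_add A_Lmult h(5) cA by blast
    next
      assume "f t \<in> A" then show "t \<in> A"
        using t_eq A_Lmult[OF L_inv[OF h(5)] A_diff[OF _ cA]] by metis
    qed
  qed
  show "t \<in> A \<Longrightarrow> f t \<in> A" "f t \<in> A \<Longrightarrow> t \<in> A" using both by auto
qed

end

context plf begin

lemma Q_bij: assumes "Q f" shows "bij f"
proof (rule bijI)
  show "inj f" unfolding inj_def
  proof (intro allI impI)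
    fix u v assume "f u = f v"
    then show "u = v" using Q_mono[OF assms, of u v] Q_mono[OF assms, of v u] by (cases "u < v"; cases "v < u") auto
  qed
  show "surj f"
  proof (rule surjI)
    fix z
    have "\<exists>w. f w = z"
    proof (cases "z \<in> {0..<r}")
      case True then show ?thesis using Q_basic(3)[OF assms] by blast
    next
      case False then show ?thesis using Q_basic(4)[OF assms] by blast
    qed
    then show "f (inv f z) = z" by (metis f_inv_into_f rangeI image_iff)
  qed
qed

lemma Q_inv_f: assumes "Q f" shows "inv f (f t) = t" "f (inv f t) = t"
  using Q_bij[OF assms] by (simp_all add: bij_def surj_f_inv_f)

lemma Q_inv_mono: assumes "Q f" "u < v" shows "inv f u < inv f v"
proof (rule ccontr)
  assume "\<not> ?thesis"
  then have "inv f v \<le> inv f u" by simp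
  then have "f (inv f v) \<le> f (inv f u)" using Q_mono[OF assms(1)] by (cases "inv f v = inv f u") (auto intro: less_imp_le)
  then show False using Q_inv_f(2)[OF assms(1)] assms(2) by simp
qed

lemma Q_inv_range: assumes "Q f" "z \<in> {0..<r}" shows "inv f z \<in> {0..<r}"
proof (rule ccontr)
  assume "inv f z \<notin> {0..<r}"
  then have "f (inv f z) = inv f z" using Q_basic(4)[OF assms(1)] by blast
  then show False using Q_inv_f(2)[OF assms(1)] assms(2) \<open>inv f z \<notin> _\<close> by simp
qed

lemma Q_comp: assumes "Q f" "Q g" shows "Q (f \<circ> g)"
proof -
  obtain gf Sf where hf: "homeomorphism {0..<r} {0..<r} f gf" "\<forall>t. t \<notin> {0..<r} \<longrightarrow> f t = t"
    "finite Sf" "Sf \<subseteq> A \<inter> {0..<r}" "0 \<in> Sf" "f ` Sf \<subseteq> A" "pcs Sf f" using Q_data[OF assms(1)] by metis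
  obtain gg Sg where hg: "homeomorphism {0..<r} {0..<r} g gg" "\<forall>t. t \<notin> {0..<r} \<longrightarrow> g t = t"
    "finite Sg" "Sg \<subseteq> A \<inter> {0..<r}" "0 \<in> Sg" "g ` Sg \<subseteq> A" "pcs Sg g" using Q_data[OF assms(2)] by metis
  have homeo: "homeomorphism {0..<r} {0..<r} (f \<circ> g) (gg \<circ> gf)" using homeomorphism_compose[OF hg(1) hf(1)] .
  have outside: "\<forall>t. t \<notin> {0..<r} \<longrightarrow> (f \<circ> g) t = t" using hf(2) hg(2) by simp
  define T where "T = Sg \<union> inv g ` Sf"
  have fT: "finite T" unfolding T_def using hf(3) hg(3) by simp
  have TA: "T \<subseteq> A \<inter> {0..<r}"
  proof
    fix t assume "t \<in> T"
    then show "t \<in> A \<inter> {0..<r}"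
    proof (cases "t \<in> Sg")
      case False
      then obtain s where s: "s \<in> Sf" "t = inv g s" using \<open>t \<in> T\<close> unfolding T_def by blast
      have "g t = s" using s Q_inv_f(2)[OF assms(2)] by simp
      then have "t \<in> A" using Q_A(2)[OF assms(2)] s hf(4) by blast
      moreover have "t \<in> {0..<r}" using s Q_inv_range[OF assms(2)] hf(4) by blast
      ultimately show ?thesis by simp
    qed (use hg(4) in blast)
  qed
  have T0: "0 \<in> T" unfolding T_def using hg(5) by simp
  have TfA: "(f \<circ> g) ` T \<subseteq> A" using TA Q_A(1)[OF assms(1)] Q_A(1)[OF assms(2)] by auto
  have pT: "pcs T (f \<circ> g)" unfolding pcs_def
  proof (intro allI impI)
    fix u v assume uv: "0 \<le> u" "u < v" "v \<le> r" "\<forall>s\<in>T. s \<le> u \<or> v \<le> s"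
    have "aff g {u..<v}" using hg(7) uv unfolding pcs_def T_def by blast
    then obtain l1 c1 where g1: "l1 \<in> L" "\<forall>w\<in>{u..<v}. g w = l1 * w + c1" unfolding aff_def by blast
    have gv: "g v = l1 * v + c1" using Q_no_jump[OF assms(2) uv(1,2,3) L_pos[OF g1(1)] g1(2)] .
    have gu0: "0 \<le> g u" using Q_basic(2)[OF assms(2), of u] uv by auto
    have guv: "g u < g v" using Q_mono[OF assms(2) uv(2)] .
    have gvr: "g v \<le> r" using Q_le_r[OF assms(2) uv(3)] .
    have gap: "\<forall>s\<in>Sf. s \<le> g u \<or> g v \<le> s"
    proof (rule ballI, rule ccontr)
      fix s assume s: "s \<in> Sf" "\<not> (s \<le> g u \<or> g v \<le> s)"
      define w where "w = inv g s"
      have gw: "g w = s" unfolding w_def using Q_inv_f(2)[OF assms(2)] .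
      have "u < w"
      proof (rule ccontr)
        assume "\<not> u < w" then have "g w \<le> g u" using Q_mono[OF assms(2), of w u] by (cases "w = u") auto
        then show False using gw s by simp
      qed
      moreover have "w < v"
      proof (rule ccontr)
        assume "\<not> w < v" then have "g v \<le> g w" using Q_mono[OF assms(2), of v w] by (cases "w = v") auto
        then show False using gw s by simp
      qed
      moreover have "w \<in> T" unfolding T_def w_def using s by blast
      ultimately show False using uv(4) by force
    qed
    have "aff f {g u..<g v}" using hf(7) gu0 guv gvr gap unfolding pcs_def by blast
    then obtain l2 c2 where f2: "l2 \<in> L" "\<forall>z\<in>{g u..<g v}. f z = l2 * z + c2" unfolding aff_def by blast
    have "\<forall>t\<in>{u..<v}. (f \<circ> g) t = (l2 * l1) * t + (l2 * c1 + c2)"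
    proof
      fix t assume t: "t \<in> {u..<v}"
      have "g u \<le> g t" using Q_mono[OF assms(2), of u t] t by (cases "u = t") auto
      moreover have "g t < g v" using Q_mono[OF assms(2), of t v] t by auto
      ultimately have "f (g t) = l2 * g t + c2" using f2 by auto
      then show "(f \<circ> g) t = (l2 * l1) * t + (l2 * c1 + c2)" using g1 t by (simp add: algebra_simps)
    qed
    then show "aff (f \<circ> g) {u..<v}" unfolding aff_def using L_mult[OF f2(1) g1(1)] by blast
  qed
  show ?thesis unfolding Q_def using homeo outside fT TA T0 TfA pT by blast
qed

lemma Q_inv: assumes "Q f" shows "Q (inv f)"
proof -
  obtain gf Sf where hf: "homeomorphism {0..<r} {0..<r} f gf" "\<forall>t. t \<notin> {0..<r} \<longrightarrow> f t = t"
    "finite Sf" "Sf \<subseteq> A \<inter> {0..<r}" "0 \<in> Sf" "f ` Sf \<subseteq> A" "pcs Sf f" using Q_data[OF assms(1)] by metis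
  note fi = Q_inv_f[OF assms]
  have gf_eq: "\<And>z. z \<in> {0..<r} \<Longrightarrow> inv f z = gf z"
  proof -
    fix z assume z: "z \<in> {0..<r}"
    have "f (gf z) = z" using hf(1) z unfolding homeomorphism_def by blast
    then show "inv f z = gf z" using fi(1)[of "gf z"] by simp
  qed
  have homeo: "homeomorphism {0..<r} {0..<r} (inv f) f"
    by (rule homeomorphism_cong[OF homeomorphism_symD[OF hf(1)]]) (auto simp: gf_eq)
  have outside: "\<forall>t. t \<notin> {0..<r} \<longrightarrow> inv f t = t" using hf(2) fi(1) by metis
  define T where "T = f ` Sf"
  have fT: "finite T" unfolding T_def using hf(3) by simp
  have TA: "T \<subseteq> A \<inter> {0..<r}" unfolding T_def using hf(4,6) Q_basic(2)[OF assms] by auto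
  have T0: "0 \<in> T" unfolding T_def using hf(5) Q_zero[OF assms] by force
  have TfA: "inv f ` T \<subseteq> A" unfolding T_def using hf(4) fi(1) by auto
  have pT: "pcs T (inv f)" unfolding pcs_def
  proof (intro allI impI)
    fix u v assume uv: "0 \<le> u" "u < v" "v \<le> r" "\<forall>s\<in>T. s \<le> u \<or> v \<le> s"
    define u' where "u' = inv f u"
    define v' where "v' = inv f v"
    have u0: "0 \<le> u'" unfolding u'_def using Q_inv_range[OF assms, of u] uv by auto
    have uv': "u' < v'" unfolding u'_def v'_def using Q_inv_mono[OF assms uv(2)] .
    have vr: "v' \<le> r"
    proof (cases "v = r")
      case True then show ?thesis unfolding v'_def using outside by simp
    next
      case False then show ?thesis unfolding v'_def using Q_inv_range[OF assms, of v] uv by auto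
    qed
    have gap: "\<forall>s\<in>Sf. s \<le> u' \<or> v' \<le> s"
    proof (rule ballI, rule ccontr)
      fix s assume s: "s \<in> Sf" "\<not> (s \<le> u' \<or> v' \<le> s)"
      then have "f u' < f s" "f s < f v'" using Q_mono[OF assms] by auto
      then have "u < f s" "f s < v" unfolding u'_def v'_def using fi(2) by auto
      moreover have "f s \<in> T" unfolding T_def using s by blast
      ultimately show False using uv(4) by force
    qed
    have "aff f {u'..<v'}" using hf(7) u0 uv' vr gap unfolding pcs_def by blast
    then obtain l c where f1: "l \<in> L" "\<forall>w\<in>{u'..<v'}. f w = l * w + c" unfolding aff_def by blast
    have lp: "l > 0" using L_pos f1(1) by simp
    have "\<forall>t\<in>{u..<v}. inv f t = inverse l * t + (- c / l)"
    proof
      fix t assume t: "t \<in> {u..<v}"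
      have "u' \<le> inv f t" unfolding u'_def using Q_inv_mono[OF assms, of u t] t by (cases "u = t") auto
      moreover have "inv f t < v'" unfolding v'_def using Q_inv_mono[OF assms, of t v] t by auto
      ultimately have "f (inv f t) = l * inv f t + c" using f1 by auto
      then have "t = l * inv f t + c" using fi(2) by simp
      then show "inv f t = inverse l * t + (- c / l)" using lp by (simp add: field_simps)
    qed
    then show "aff (inv f) {u..<v}" unfolding aff_def using L_inv[OF f1(1)] by blast
  qed
  show ?thesis unfolding Q_def using homeo outside fT TA T0 TfA pT by blast
qed

lemma Q_id: "Q id"
proof -
  have h1: "homeomorphism {0..<r} {0..<r} id id" using homeomorphism_ident unfolding id_def .
  have h2: "pcs {0} id" unfolding pcs_def
  proof (intro allI impI)
    fix u v :: real
    have "\<forall>t\<in>{u..<v}. id t = 1 * t + 0" by simp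
    then show "aff id {u..<v}" unfolding aff_def using L_one by blast
  qed
  have h3: "{0} \<subseteq> A \<inter> {0..<r}" using A_zero r_pos by simp
  have h4: "id ` {0} \<subseteq> A" using A_zero by simp
  have h5: "\<forall>t. t \<notin> {0..<r} \<longrightarrow> id t = t" by simp
  have h6: "finite {0::real}" "(0::real) \<in> {0}" by simp_all
  show ?thesis unfolding Q_def using h1 h2 h3 h4 h5 h6 by blast
qed

lemma PLF_comp: "f \<in> PLF r L A \<Longrightarrow> g \<in> PLF r L A \<Longrightarrow> f \<circ> g \<in> PLF r L A"
  using Q_comp PLF_iff_Q by blast
lemma PLF_inv: "f \<in> PLF r L A \<Longrightarrow> inv f \<in> PLF r L A"
  using Q_inv PLF_iff_Q by blast
lemma PLF_id: "id \<in> PLF r L A"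
  using Q_id PLF_iff_Q by blast

end

locale main = plf +
  fixes \<alpha> \<beta> :: real and x :: "real \<Rightarrow> real"
  assumes h\<alpha>: "\<alpha> \<in> {0..r} \<inter> A" and h\<beta>: "\<beta> \<in> {0..r} \<inter> A" and ab: "\<alpha> < \<beta>"
    and hx: "x \<in> PLF_on r L A {\<alpha><..<\<beta>}"
    and hfix: "fixset r x \<inter> {\<alpha><..<\<beta>} \<inter> A = {}"
begin

abbreviation "G \<equiv> PLF_on r L A {\<alpha><..<\<beta>}"
abbreviation "C \<equiv> centralizer_in G x"

lemma a0: "0 \<le> \<alpha>" and ar: "\<alpha> < r" and br: "\<beta> \<le> r" and aA: "\<alpha> \<in> A"
  using h\<alpha> h\<beta> ab by auto

lemma G_Q: "y \<in> G \<Longrightarrow> Q y" unfolding PLF_on_def using PLF_Q by blast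

lemma G_fix: assumes "y \<in> G" "t \<notin> {\<alpha><..<\<beta>}" shows "y t = t"
proof (cases "t \<in> {0..<r}")
  case True
  then show ?thesis using assms unfolding PLF_on_def supp_def by blast
next
  case False then show ?thesis using Q_basic(4)[OF G_Q[OF assms(1)]] by blast
qed

lemma G_alpha: "y \<in> G \<Longrightarrow> y \<alpha> = \<alpha>" using G_fix by simp
lemma G_beta: "y \<in> G \<Longrightarrow> y \<beta> = \<beta>" using G_fix by simp

lemma xG: "x \<in> G" using hx .
lemma Qx: "Q x" using G_Q[OF xG] .

lemma C_iff: "y \<in> C \<longleftrightarrow> y \<in> G \<and> y \<circ> x = x \<circ> y" unfolding centralizer_in_def by simp

lemma C_comm: "y \<in> C \<Longrightarrow> y (x t) = x (y t)" unfolding C_iff by (metis comp_apply)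

lemma C_comm_inv: assumes "y \<in> C" shows "y (inv x t) = inv x (y t)"
proof -
  have "y (x (inv x t)) = x (y (inv x t))" using C_comm[OF assms] .
  then have "y t = x (y (inv x t))" using Q_inv_f(2)[OF Qx] by simp
  then show ?thesis using Q_inv_f(1)[OF Qx] by metis
qed

lemma G_comp: assumes "y \<in> G" "z \<in> G" shows "y \<circ> z \<in> G"
proof -
  have "y \<circ> z \<in> PLF r L A" using assms PLF_comp unfolding PLF_on_def by blast
  moreover have "supp r (y \<circ> z) \<subseteq> {\<alpha><..<\<beta>}"
  proof
    fix t assume t: "t \<in> supp r (y \<circ> z)"
    show "t \<in> {\<alpha><..<\<beta>}"
    proof (rule ccontr)
      assume "t \<notin> {\<alpha><..<\<beta>}"
      then have "z t = t" "y t = t" using G_fix assms by auto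
      then show False using t unfolding supp_def by simp
    qed
  qed
  ultimately show ?thesis unfolding PLF_on_def by blast
qed

lemma G_inv: assumes "y \<in> G" shows "inv y \<in> G"
proof -
  have Qy: "Q y" using G_Q[OF assms] .
  have "inv y \<in> PLF r L A" using assms PLF_inv unfolding PLF_on_def by blast
  moreover have "supp r (inv y) \<subseteq> {\<alpha><..<\<beta>}"
  proof
    fix t assume t: "t \<in> supp r (inv y)"
    show "t \<in> {\<alpha><..<\<beta>}"
    proof (rule ccontr)
      assume "t \<notin> {\<alpha><..<\<beta>}"
      then have "y t = t" using G_fix assms by auto
      then have "inv y t = t" using Q_inv_f(1)[OF Qy, of t] by simp
      then show False using t unfolding supp_def by simp
    qed
  qed
  ultimately show ?thesis unfolding PLF_on_def by blast
qed

lemma G_id: "id \<in> G" unfolding PLF_on_def supp_def using PLF_id by auto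

lemma C_comp: assumes "y \<in> C" "z \<in> C" shows "y \<circ> z \<in> C"
  using assms G_comp unfolding C_iff by (metis comp_assoc)

lemma C_inv: assumes "y \<in> C" shows "inv y \<in> C"
proof -
  have Qy: "Q y" using assms C_iff G_Q by blast
  have "inv y \<circ> x = x \<circ> inv y"
  proof
    fix t
    have "y (x (inv y t)) = x (y (inv y t))" using C_comm[OF assms] .
    then have "y (x (inv y t)) = x t" using Q_inv_f(2)[OF Qy] by simp
    then have "x (inv y t) = inv y (x t)" using Q_inv_f(1)[OF Qy] by metis
    then show "(inv y \<circ> x) t = (x \<circ> inv y) t" by simp
  qed
  then show ?thesis using G_inv assms unfolding C_iff by blast
qed

lemma C_id: "id \<in> C" unfolding C_iff using G_id by simp

lemma x_nofixA: assumes "t \<in> {\<alpha><..<\<beta>}" "t \<in> A" shows "x t \<noteq> t"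
proof
  assume "x t = t"
  then have "t \<in> fixset r x" unfolding fixset_def using assms a0 br by auto
  then show False using hfix assms by blast
qed

lemma affine_two_fix:
  assumes "\<forall>w\<in>{a..b}. f w = l * w + c" "f a = a" "f b = b" "a < (b::real)"
  shows "\<forall>w\<in>{a..b}. f w = w"
proof -
  have "l * a + c = a" "l * b + c = b" using assms by auto
  then have "l * (b - a) = b - a" by (simp add: algebra_simps)
  then have l1: "l = 1" using assms(4) by simp
  then have "c = 0" using \<open>l * a + c = a\<close> by simp
  then show ?thesis using assms(1) l1 by simp
qed

lemma x_no_id_interval:
  assumes "\<alpha> \<le> a" "a < b" "b \<le> \<beta>" "\<forall>w\<in>{a..b}. x w = w"
  shows False
proof -
  obtain t where t: "t \<in> A" "a < t" "t < b" using A_dense[OF assms(2)] by blast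
  then show False using x_nofixA[of t] assms by auto
qed

end

lemma comm_inv_gen:
  assumes "bij g" "\<And>t. y (g t) = g (y t)"
  shows "y (inv g t) = inv g (y t)"
proof -
  have "y (g (inv g t)) = g (y (inv g t))" using assms(2) .
  then have "y t = g (y (inv g t))" using assms(1) by (simp add: bij_is_surj surj_f_inv_f)
  then show ?thesis using assms(1) by (metis bij_is_inj inv_f_f)
qed

context main begin

definition "Fx = {q \<in> {\<alpha><..<\<beta>}. x q = q}"
definition "p = (if Fx = {} then \<beta> else Inf Fx)"

lemma near_alpha_nofix: "\<exists>d>0. \<forall>q. \<alpha> < q \<longrightarrow> q \<le> \<alpha> + d \<longrightarrow> x q \<noteq> q"
proof -
  obtain d l c where g: "d > 0" "l \<in> L" "\<forall>w\<in>{\<alpha>..\<alpha>+d}. x w = l * w + c"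
    using Q_right_germ[OF Qx a0 ar] by blast
  define d' where "d' = min d ((\<beta> - \<alpha>)/2)"
  have "(\<beta> - \<alpha>)/2 < \<beta> - \<alpha>" "(\<beta> - \<alpha>)/2 > 0" using ab by simp_all
  moreover have "d' \<le> (\<beta> - \<alpha>)/2" "d' \<le> d" unfolding d'_def by (rule min.cobounded2, rule min.cobounded1)
  moreover have "d' > 0" unfolding d'_def using g ab by simp
  ultimately have d': "d' > 0" "d' \<le> d" "\<alpha> + d' < \<beta>" by linarith+
  have "\<forall>q. \<alpha> < q \<longrightarrow> q \<le> \<alpha> + d' \<longrightarrow> x q \<noteq> q"
  proof (intro allI impI notI)
    fix q assume q: "\<alpha> < q" "q \<le> \<alpha> + d'" "x q = q"
    have "\<forall>w\<in>{\<alpha>..q}. x w = l * w + c" using g(3) q d' by auto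
    then have "\<forall>w\<in>{\<alpha>..q}. x w = w" using affine_two_fix[of \<alpha> q x l c] q G_alpha[OF xG] by blast
    then show False using x_no_id_interval[of \<alpha> q] q d' by auto
  qed
  then show ?thesis using d' by blast
qed

lemma p_props: "\<alpha> < p" "p \<le> \<beta>" "x p = p" "\<And>t. \<alpha> < t \<Longrightarrow> t < p \<Longrightarrow> x t \<noteq> t"
proof -
  obtain d where d: "d > 0" "\<forall>q. \<alpha> < q \<longrightarrow> q \<le> \<alpha> + d \<longrightarrow> x q \<noteq> q" using near_alpha_nofix by blast
  have Fx_lb: "q \<in> Fx \<Longrightarrow> \<alpha> + d < q" for q using d unfolding Fx_def by force
  have "(\<alpha> < p \<and> p \<le> \<beta> \<and> x p = p) \<and> (\<forall>t. \<alpha> < t \<longrightarrow> t < p \<longrightarrow> x t \<noteq> t)"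
  proof (cases "Fx = {}")
    case True
    then have "p = \<beta>" unfolding p_def by simp
    moreover have "\<forall>t. \<alpha> < t \<longrightarrow> t < \<beta> \<longrightarrow> x t \<noteq> t" using True unfolding Fx_def by auto
    ultimately show ?thesis using ab G_beta[OF xG] by simp
  next
    case False
    then have pI: "p = Inf Fx" unfolding p_def by simp
    have bdd: "bdd_below Fx" using Fx_lb by (meson bdd_below.I less_imp_le)
    have lower: "q \<in> Fx \<Longrightarrow> p \<le> q" for q unfolding pI using cInf_lower[OF _ bdd] by blast
    have pge: "\<alpha> + d \<le> p" unfolding pI using False Fx_lb by (meson cInf_greatest less_imp_le)
    obtain q0 where q0: "q0 \<in> Fx" using False by blast
    have pb: "p < \<beta>" using lower[OF q0] q0 unfolding Fx_def by auto
    have pa: "\<alpha> < p" using pge d by simp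
    have nofix: "\<forall>t. \<alpha> < t \<longrightarrow> t < p \<longrightarrow> x t \<noteq> t"
    proof (intro allI impI notI)
      fix t assume t: "\<alpha> < t" "t < p" "x t = t"
      then have "t \<in> Fx" unfolding Fx_def using pb by auto
      then show False using lower t by force
    qed
    have xp: "x p = p"
    proof (rule ccontr)
      assume np: "x p \<noteq> p"
      obtain \<eta> l c where g: "\<eta> > 0" "l \<in> L" "\<forall>w\<in>{p..p+\<eta>}. x w = l * w + c"
        using Q_right_germ[OF Qx, of p] pa pb a0 br by force
      have "Inf Fx < p + \<eta>" using pI g by simp
      then obtain q1 where q1: "q1 \<in> Fx" "q1 < p + \<eta>" using cInf_less_iff[OF False bdd] by blast
      have "p \<noteq> q1" using q1 np unfolding Fx_def by auto
      then have pq1: "p < q1" using lower[OF q1(1)] by simp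
      then have "Inf Fx < q1" using pI by simp
      then obtain q2 where q2: "q2 \<in> Fx" "q2 < q1" using cInf_less_iff[OF False bdd] by blast
      have "p \<noteq> q2" using q2 np unfolding Fx_def by auto
      then have pq2: "p < q2" using lower[OF q2(1)] by simp
      have "\<forall>w\<in>{q2..q1}. x w = l * w + c" using g(3) pq2 q1 by auto
      then have "\<forall>w\<in>{q2..q1}. x w = w" using affine_two_fix[of q2 q1 x l c] q1 q2 unfolding Fx_def by blast
      then show False using x_no_id_interval[of q2 q1] q1 q2 pa pq2 unfolding Fx_def by auto
    qed
    show ?thesis using pa pb xp nofix by simp
  qed
  then show "\<alpha> < p" "p \<le> \<beta>" "x p = p" "\<And>t. \<alpha> < t \<Longrightarrow> t < p \<Longrightarrow> x t \<noteq> t" by auto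
qed

lemma p_r: "p \<le> r" "0 < p" using p_props br a0 by auto

lemma x_sign: "(\<forall>t. \<alpha> < t \<and> t < p \<longrightarrow> x t > t) \<or> (\<forall>t. \<alpha> < t \<and> t < p \<longrightarrow> x t < t)"
proof (rule ccontr)
  assume "\<not> ?thesis"
  then obtain t1 t2 where t1: "\<alpha> < t1" "t1 < p" "x t1 \<le> t1" and t2: "\<alpha> < t2" "t2 < p" "x t2 \<ge> t2"
    by (meson not_le)
  have ne1: "x t1 \<noteq> t1" "x t2 \<noteq> t2" using p_props(4) t1 t2 by auto
  define \<phi> where "\<phi> = (\<lambda>t. x t - t)"
  have cont: "continuous_on {a..b} \<phi>" if "\<alpha> < a" "b < p" for a b
  proof -
    have "{a..b} \<subseteq> {0..<r}" using that a0 p_r by auto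
    then have "continuous_on {a..b} x" using continuous_on_subset[OF Q_basic(1)[OF Qx]] by blast
    then show ?thesis unfolding \<phi>_def by (intro continuous_intros)
  qed
  have "\<exists>t. min t1 t2 \<le> t \<and> t \<le> max t1 t2 \<and> \<phi> t = 0"
  proof (cases "t1 \<le> t2")
    case True
    then show ?thesis using IVT'[of \<phi> t1 0 t2] cont[of t1 t2] t1 t2 unfolding \<phi>_def by auto
  next
    case False
    then show ?thesis using IVT2'[of \<phi> t1 0 t2] cont[of t2 t1] t1 t2 unfolding \<phi>_def by auto
  qed
  then obtain t where t: "min t1 t2 \<le> t" "t \<le> max t1 t2" "x t = t" unfolding \<phi>_def by auto
  then show False using p_props(4)[of t] t1 t2 by auto
qed

definition "g = (if (\<forall>t. \<alpha> < t \<and> t < p \<longrightarrow> x t > t) then x else inv x)"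

lemma g_props: "Q g" "g \<alpha> = \<alpha>" "g p = p" "\<And>t. \<alpha> < t \<Longrightarrow> t < p \<Longrightarrow> g t > t"
  "\<And>y t. y \<in> C \<Longrightarrow> y (g t) = g (y t)"
proof -
  have all: "Q g \<and> g \<alpha> = \<alpha> \<and> g p = p \<and> (\<forall>t. \<alpha> < t \<and> t < p \<longrightarrow> g t > t) \<and> (\<forall>y t. y \<in> C \<longrightarrow> y (g t) = g (y t))"
  proof (cases "\<forall>t. \<alpha> < t \<and> t < p \<longrightarrow> x t > t")
    case True
    have gx: "g = x" unfolding g_def by (rule if_P[OF True])
    then show ?thesis using Qx G_alpha[OF xG] p_props(3) C_comm True by simp
  next
    case False
    then have lt: "\<forall>t. \<alpha> < t \<and> t < p \<longrightarrow> x t < t" using x_sign by blast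
    have gi: "g = inv x" unfolding g_def by (rule if_not_P[OF False])
    have "inv x \<alpha> = \<alpha>" using Q_inv_f(1)[OF Qx, of \<alpha>] G_alpha[OF xG] by simp
    moreover have "inv x p = p" using Q_inv_f(1)[OF Qx, of p] p_props(3) by simp
    moreover have "\<forall>t. \<alpha> < t \<and> t < p \<longrightarrow> inv x t > t"
    proof (intro allI impI)
      fix t assume t: "\<alpha> < t \<and> t < p"
      show "inv x t > t"
      proof (rule ccontr)
        assume "\<not> ?thesis"
        then have "x (inv x t) \<le> x t" using Q_mono[OF Qx, of "inv x t" t] by (cases "inv x t = t") auto
        then show False using Q_inv_f(2)[OF Qx, of t] lt t by auto
      qed
    qed
    ultimately show ?thesis unfolding gi using Q_inv[OF Qx] C_comm_inv by blast
  qed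
  show "Q g" "g \<alpha> = \<alpha>" "g p = p" "\<And>t. \<alpha> < t \<Longrightarrow> t < p \<Longrightarrow> g t > t"
    "\<And>y t. y \<in> C \<Longrightarrow> y (g t) = g (y t)" using all by auto
qed

end

lemma lin_two_pts:
  assumes "l * a + c = a" "l * b + c = (b::real)" "a \<noteq> b"
  shows "l = 1" "c = 0"
proof -
  have "l * (b - a) = b - a" using assms by (simp add: algebra_simps)
  then show l1: "l = 1" using assms(3) by simp
  then show "c = 0" using assms(1) by simp
qed

context main begin

lemma g_mono: "u < v \<Longrightarrow> g u < g v" using Q_mono[OF g_props(1)] .
lemma g_inj: "g u = g v \<Longrightarrow> u = v" using g_mono by (metis linorder_neqE_linordered_idom less_irrefl)

lemma g_germ_alpha:
  "\<exists>lam e. lam > 1 \<and> \<alpha> < e \<and> e < p \<and> (\<forall>w\<in>{\<alpha>..e}. g w = \<alpha> + lam * (w - \<alpha>))"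
proof -
  obtain \<delta> l c where h: "\<delta> > 0" "l \<in> L" "\<forall>w\<in>{\<alpha>..\<alpha>+\<delta>}. g w = l * w + c"
    using Q_right_germ[OF g_props(1) a0 ar] by blast
  have c: "c = \<alpha> - l * \<alpha>" using h(3) g_props(2) h(1) by force
  define e where "e = \<alpha> + min \<delta> ((p - \<alpha>)/2)"
  have pa: "p - \<alpha> > 0" "(p - \<alpha>)/2 < p - \<alpha>" using p_props(1) by simp_all
  have "min \<delta> ((p - \<alpha>)/2) > 0" using h(1) pa by simp
  moreover have "min \<delta> ((p - \<alpha>)/2) \<le> \<delta>" "min \<delta> ((p - \<alpha>)/2) \<le> (p - \<alpha>)/2" by (rule min.cobounded1, rule min.cobounded2)
  ultimately have e: "\<alpha> < e" "e \<le> \<alpha> + \<delta>" "e < p" unfolding e_def using pa by linarith+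
  have ge: "\<forall>w\<in>{\<alpha>..e}. g w = \<alpha> + l * (w - \<alpha>)" using h(3) e c by (auto simp: algebra_simps)
  have "g e > e" using g_props(4) e by simp
  then have "\<alpha> + l * (e - \<alpha>) > \<alpha> + 1 * (e - \<alpha>)" using ge e by simp
  then have "1 * (e - \<alpha>) < l * (e - \<alpha>)" by simp
  then have "l > 1" using e(1) by (simp add: mult_less_cancel_right)
  then show ?thesis using e ge by blast
qed

lemma g_germ_p:
  "\<exists>\<mu> d. \<mu> < 1 \<and> \<mu> > 0 \<and> \<alpha> < d \<and> d < p \<and> (\<forall>w\<in>{d..p}. g w = p + \<mu> * (w - p))"
proof -
  obtain \<delta> l c where h: "\<delta> > 0" "l \<in> L" "\<forall>w\<in>{p-\<delta>..p}. g w = l * w + c"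
    using Q_left_germ[OF g_props(1) p_r(2) p_r(1)] by blast
  have c: "c = p - l * p" using h(3) g_props(3) h(1) by force
  define d where "d = p - min \<delta> ((p - \<alpha>)/2)"
  have pa: "p - \<alpha> > 0" "(p - \<alpha>)/2 < p - \<alpha>" using p_props(1) by simp_all
  have "min \<delta> ((p - \<alpha>)/2) > 0" using h(1) pa by simp
  moreover have "min \<delta> ((p - \<alpha>)/2) \<le> \<delta>" "min \<delta> ((p - \<alpha>)/2) \<le> (p - \<alpha>)/2" by (rule min.cobounded1, rule min.cobounded2)
  ultimately have d: "\<alpha> < d" "p - \<delta> \<le> d" "d < p" unfolding d_def using pa by linarith+
  have gd: "\<forall>w\<in>{d..p}. g w = p + l * (w - p)" using h(3) d c by (auto simp: algebra_simps)
  have "g d > d" using g_props(4) d by simp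
  then have "p + l * (d - p) > p + 1 * (d - p)" using gd d by simp
  then have "l * (p - d) < 1 * (p - d)" by (simp add: algebra_simps)
  then have "l < 1" using d by (simp add: mult_less_cancel_right)
  then show ?thesis using d gd L_pos[OF h(2)] by blast
qed

lemma C_G: "y \<in> C \<Longrightarrow> y \<in> G" unfolding C_iff by simp
lemma C_Q: "y \<in> C \<Longrightarrow> Q y" using C_G G_Q by blast

lemma C_fix_p: assumes "y \<in> C" shows "y p = p"
proof -
  have Qy: "Q y" using C_Q[OF assms] .
  have ya: "y \<alpha> = \<alpha>" using G_alpha[OF C_G[OF assms]] .
  have xyp: "x (y p) = y p" using C_comm[OF assms, of p] p_props(3) by simp
  show ?thesis
  proof (rule ccontr)
    assume ne: "y p \<noteq> p"
    show False
    proof (cases "y p < p")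
      case True
      have "y \<alpha> < y p" using Q_mono[OF Qy] p_props(1) by blast
      then show False using p_props(4)[of "y p"] True xyp ya by simp
    next
      case False
      then have gt: "p < y p" using ne by simp
      define w where "w = inv y p"
      have yi: "inv y \<in> C" using C_inv[OF assms] .
      have "x w = inv y (x p)" unfolding w_def using C_comm[OF yi] by simp
      then have xw: "x w = w" unfolding w_def using p_props(3) by simp
      have "w < inv y (y p)" unfolding w_def using Q_inv_mono[OF Qy gt] .
      then have wp: "w < p" using Q_inv_f(1)[OF Qy] by simp
      have "inv y \<alpha> < w" unfolding w_def using Q_inv_mono[OF Qy p_props(1)] .
      moreover have "inv y \<alpha> = \<alpha>" using Q_inv_f(1)[OF Qy, of \<alpha>] ya by simp
      ultimately show False using p_props(4)[of w] wp xw by simp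
    qed
  qed
qed

definition sl :: "(real \<Rightarrow> real) \<Rightarrow> real" where
  "sl y = (THE s. \<exists>\<delta>>0. \<forall>w\<in>{\<alpha>..\<alpha>+\<delta>}. y w = \<alpha> + s * (w - \<alpha>))"

lemma sl_unique:
  assumes "\<delta>1 > 0" "\<forall>w\<in>{\<alpha>..\<alpha>+\<delta>1}. y w = \<alpha> + s1 * (w - \<alpha>)"
    "\<delta>2 > 0" "\<forall>w\<in>{\<alpha>..\<alpha>+\<delta>2}. y w = \<alpha> + s2 * (w - \<alpha>)"
  shows "s1 = s2"
proof -
  define m where "m = min \<delta>1 \<delta>2"
  have m: "m > 0" "m \<le> \<delta>1" "m \<le> \<delta>2" unfolding m_def using assms by auto
  have "\<alpha> + m \<in> {\<alpha>..\<alpha>+\<delta>1}" "\<alpha> + m \<in> {\<alpha>..\<alpha>+\<delta>2}" using m by auto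
  then have "y (\<alpha> + m) = \<alpha> + s1 * ((\<alpha> + m) - \<alpha>)" "y (\<alpha> + m) = \<alpha> + s2 * ((\<alpha> + m) - \<alpha>)"
    using assms(2,4) by blast+
  then have "s1 * m = s2 * m" by (metis add_diff_cancel_left' add_left_cancel)
  then show ?thesis using m(1) mult_right_cancel[of m s1 s2] by auto
qed

lemma sl_eq:
  assumes "\<delta> > 0" "\<forall>w\<in>{\<alpha>..\<alpha>+\<delta>}. y w = \<alpha> + s * (w - \<alpha>)"
  shows "sl y = s"
  unfolding sl_def
proof (rule the_equality)
  show "\<exists>\<delta>>0. \<forall>w\<in>{\<alpha>..\<alpha>+\<delta>}. y w = \<alpha> + s * (w - \<alpha>)" using assms by blast
  fix s' assume "\<exists>\<delta>>0. \<forall>w\<in>{\<alpha>..\<alpha>+\<delta>}. y w = \<alpha> + s' * (w - \<alpha>)"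
  then show "s' = s" using sl_unique assms by blast
qed

lemma sl_prop:
  assumes "y \<in> G"
  shows "\<exists>\<delta>>0. \<forall>w\<in>{\<alpha>..\<alpha>+\<delta>}. y w = \<alpha> + sl y * (w - \<alpha>)" "sl y \<in> L" "sl y > 0"
proof -
  obtain \<delta> l c where h: "\<delta> > 0" "l \<in> L" "\<forall>w\<in>{\<alpha>..\<alpha>+\<delta>}. y w = l * w + c"
    using Q_right_germ[OF G_Q[OF assms] a0 ar] by blast
  have c: "c = \<alpha> - l * \<alpha>" using h(3) G_alpha[OF assms] h(1) by force
  have h2: "\<forall>w\<in>{\<alpha>..\<alpha>+\<delta>}. y w = \<alpha> + l * (w - \<alpha>)" using h(3) c by (auto simp: algebra_simps)
  have "sl y = l" using sl_eq[OF h(1) h2] .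
  then show "\<exists>\<delta>>0. \<forall>w\<in>{\<alpha>..\<alpha>+\<delta>}. y w = \<alpha> + sl y * (w - \<alpha>)" "sl y \<in> L" "sl y > 0"
    using h(1,2) h2 L_pos by auto
qed

lemma sl_comp:
  assumes "y \<in> G" "z \<in> G"
  shows "sl (y \<circ> z) = sl y * sl z"
proof -
  obtain \<delta>y where dy: "\<delta>y > 0" "\<forall>w\<in>{\<alpha>..\<alpha>+\<delta>y}. y w = \<alpha> + sl y * (w - \<alpha>)" using sl_prop(1)[OF assms(1)] by blast
  obtain \<delta>z where dz: "\<delta>z > 0" "\<forall>w\<in>{\<alpha>..\<alpha>+\<delta>z}. z w = \<alpha> + sl z * (w - \<alpha>)" using sl_prop(1)[OF assms(2)] by blast
  have sz: "sl z > 0" using sl_prop(3)[OF assms(2)] .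
  define m where "m = min \<delta>z (\<delta>y / sl z)"
  have m: "m > 0" "m \<le> \<delta>z" "m \<le> \<delta>y / sl z" unfolding m_def using dy dz sz by auto
  have "\<forall>w\<in>{\<alpha>..\<alpha>+m}. (y \<circ> z) w = \<alpha> + (sl y * sl z) * (w - \<alpha>)"
  proof
    fix w assume w: "w \<in> {\<alpha>..\<alpha>+m}"
    have zw: "z w = \<alpha> + sl z * (w - \<alpha>)" using dz w m by auto
    have "sl z * (w - \<alpha>) \<le> sl z * m" using w sz by (simp add: mult_left_mono)
    also have "\<dots> \<le> \<delta>y" using m(3) sz by (simp add: field_simps)
    finally have "z w \<in> {\<alpha>..\<alpha>+\<delta>y}" using zw sz w by simp
    then have "y (z w) = \<alpha> + sl y * (z w - \<alpha>)" using dy by blast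
    then show "(y \<circ> z) w = \<alpha> + (sl y * sl z) * (w - \<alpha>)" using zw by simp
  qed
  then show ?thesis using sl_eq m(1) by blast
qed

lemma sl_id: "sl id = 1"
  using sl_eq[of 1 id 1] by simp

lemma G_inv_comp: assumes "y \<in> G" shows "y \<circ> inv y = id"
  using Q_inv_f(2)[OF G_Q[OF assms]] by (simp add: fun_eq_iff)

lemma sl_inv: assumes "y \<in> G" shows "sl (inv y) = inverse (sl y)"
proof -
  have "sl y * sl (inv y) = 1" using sl_comp[OF assms G_inv[OF assms]] G_inv_comp[OF assms] sl_id by simp
  then show ?thesis using sl_prop(3)[OF assms] by (simp add: field_simps)
qed

end

context main begin

lemma ext_alpha:
  assumes lam: "lam > 1" and e: "\<alpha> < e" "e < p" and ge: "\<forall>w\<in>{\<alpha>..e}. g w = \<alpha> + lam * (w - \<alpha>)"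
    and y: "y \<in> C" and sle: "sl y \<le> lam"
  shows "\<forall>w\<in>{\<alpha>..e}. y w = \<alpha> + sl y * (w - \<alpha>)"
proof -
  define s where "s = sl y"
  have s0: "s > 0" unfolding s_def using sl_prop(3)[OF C_G[OF y]] .
  obtain \<delta> where d: "\<delta> > 0" "\<forall>w\<in>{\<alpha>..\<alpha>+\<delta>}. y w = \<alpha> + s * (w - \<alpha>)"
    using sl_prop(1)[OF C_G[OF y]] unfolding s_def by blast
  have step: "\<forall>w\<in>{\<alpha>..min e (\<alpha> + lam^k * \<delta>)}. y w = \<alpha> + s * (w - \<alpha>)" for k
  proof (induction k)
    case 0 then show ?case using d by auto
  next
    case (Suc k)
    show ?case
    proof
      fix w assume w: "w \<in> {\<alpha>..min e (\<alpha> + lam^(Suc k) * \<delta>)}"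
      define w' where "w' = \<alpha> + (w - \<alpha>) / lam"
      have wa: "0 \<le> w - \<alpha>" "w \<le> e" "w - \<alpha> \<le> lam^(Suc k) * \<delta>" using w by auto
      have q1: "0 \<le> (w - \<alpha>) / lam" using wa lam by simp
      have "w - \<alpha> \<le> (w - \<alpha>) * lam" using mult_left_mono[of 1 lam "w - \<alpha>"] wa lam by simp
      then have q2: "(w - \<alpha>) / lam \<le> w - \<alpha>" using lam by (simp add: divide_le_eq)
      have q3: "(w - \<alpha>) / lam \<le> lam^k * \<delta>" using wa lam by (simp add: field_simps)
      have w'1: "w' \<in> {\<alpha>..e}" unfolding w'_def using q1 q2 wa by auto
      have gw': "g w' = w" using ge w'1 lam unfolding w'_def by simp
      have "w' \<in> {\<alpha>..min e (\<alpha> + lam^k * \<delta>)}" using w'1 q3 unfolding w'_def by auto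
      then have yw': "y w' = \<alpha> + (s / lam) * (w - \<alpha>)" using Suc.IH unfolding w'_def by simp
      have r1: "0 \<le> (s / lam) * (w - \<alpha>)" using s0 lam wa by simp
      have "s / lam \<le> 1" using sle lam unfolding s_def by simp
      then have r2: "(s / lam) * (w - \<alpha>) \<le> w - \<alpha>" using wa mult_right_mono[of "s/lam" 1 "w - \<alpha>"] by simp
      have "y w' \<in> {\<alpha>..e}" using yw' r1 r2 wa by auto
      then have "g (y w') = \<alpha> + lam * ((s / lam) * (w - \<alpha>))" using ge yw' by simp
      also have "\<dots> = \<alpha> + s * (w - \<alpha>)" using lam by simp
      finally show "y w = \<alpha> + s * (w - \<alpha>)" using g_props(5)[OF y, of w'] gw' by simp
    qed
  qed
  obtain k where k: "(e - \<alpha>) / \<delta> < lam ^ k" using real_arch_pow[OF lam] by blast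
  then have "e - \<alpha> < lam ^ k * \<delta>" using d(1) by (simp add: field_simps)
  then have "min e (\<alpha> + lam^k * \<delta>) = e" by simp
  then show ?thesis using step[of k] unfolding s_def by simp
qed

lemma ext_p:
  assumes mu: "\<mu> < 1" "\<mu> > 0" and d: "\<alpha> < d" "d < p" and gd: "\<forall>w\<in>{d..p}. g w = p + \<mu> * (w - p)"
    and y: "y \<in> C" and de: "\<delta> > 0" "\<forall>w\<in>{p-\<delta>..p}. y w = p + s * (w - p)" and s: "0 < s" "s \<le> 1"
  shows "\<forall>w\<in>{d..p}. y w = p + s * (w - p)"
proof -
  have step: "\<forall>w\<in>{max d (p - \<delta> / \<mu>^k)..p}. y w = p + s * (w - p)" for k
  proof (induction k)
    case 0 then show ?case using de by auto
  next
    case (Suc k)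
    show ?case
    proof
      fix w assume w: "w \<in> {max d (p - \<delta> / \<mu>^(Suc k))..p}"
      have wa: "d \<le> w" "w \<le> p" "p - w \<le> \<delta> / \<mu>^(Suc k)" using w by auto
      have gw: "g w = p + \<mu> * (w - p)" using gd wa by simp
      have "\<mu> * (p - w) \<le> p - w" using mu wa mult_right_mono[of \<mu> 1 "p - w"] by simp
      moreover have "\<mu> * (w - p) \<le> 0" using mu wa by (simp add: mult_nonneg_nonpos)
      ultimately have gw1: "d \<le> g w" "g w \<le> p" using gw wa by (auto simp: algebra_simps)
      have "\<mu> * (p - w) \<le> \<mu> * (\<delta> / \<mu>^(Suc k))" by (rule mult_left_mono) (use wa mu in auto)
      also have "\<dots> = \<delta> / \<mu>^k" using mu by simp
      finally have "p - g w \<le> \<delta> / \<mu>^k" using gw by (simp add: algebra_simps)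
      then have "g w \<in> {max d (p - \<delta> / \<mu>^k)..p}" using gw1 by auto
      then have ygw: "y (g w) = p + s * (g w - p)" using Suc.IH by blast
      define z where "z = p + s * (w - p)"
      have "s * (p - w) \<le> p - w" using s wa mult_right_mono[of s 1 "p - w"] by simp
      moreover have "0 \<le> s * (p - w)" using s wa by simp
      ultimately have "z \<in> {d..p}" unfolding z_def using wa by (auto simp: algebra_simps)
      then have "g z = p + \<mu> * (s * (w - p))" using gd unfolding z_def by simp
      also have "\<dots> = p + s * (g w - p)" unfolding gw by (simp add: algebra_simps)
      also have "\<dots> = y (g w)" using ygw by simp
      also have "\<dots> = g (y w)" using g_props(5)[OF y] by simp
      finally show "y w = p + s * (w - p)" using g_inj unfolding z_def by metis
    qed
  qed
  have im: "1 < 1 / \<mu>" using mu by simp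
  obtain k where k: "(p - d) / \<delta> < (1/\<mu>) ^ k" using real_arch_pow[OF im] by blast
  then have "p - d < \<delta> / \<mu>^k" using de(1) mu by (simp add: field_simps power_one_over)
  then have "max d (p - \<delta> / \<mu>^k) = d" by simp
  then show ?thesis using step[of k] by simp
qed

end

context plf begin
lemma Q_mono_le: "Q f \<Longrightarrow> u \<le> v \<Longrightarrow> f u \<le> f v"
  using Q_mono[of f u v] by (cases "u = v") auto

lemma Q_funpow_mono: "Q f \<Longrightarrow> u \<le> v \<Longrightarrow> (f ^^ n) u \<le> (f ^^ n) v"
  by (induction n) (auto intro: Q_mono_le)

lemma Q_funpow: "Q f \<Longrightarrow> Q (f ^^ n)"
proof (induction n)
  case 0
  have "f ^^ 0 = id" by (simp add: fun_eq_iff)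
  then show ?case using Q_id by (simp only:)
next
  case (Suc n)
  then have "Q (f \<circ> f ^^ n)" using Q_comp by blast
  then show ?case by (simp only: funpow.simps(2))
qed
end

lemma funpow_comm: "(\<And>t. y (h t) = h (y t)) \<Longrightarrow> y ((h ^^ n) t) = (h ^^ n) (y t)"
  by (induction n) auto

context main begin

abbreviation "h \<equiv> inv g"

lemma h_props: "Q h" "h \<alpha> = \<alpha>" "\<And>t. \<alpha> < t \<Longrightarrow> t < p \<Longrightarrow> \<alpha> < h t \<and> h t < t"
  "\<And>y t. y \<in> C \<Longrightarrow> y (h t) = h (y t)"
proof -
  note Qg = g_props(1)
  show "Q h" using Q_inv[OF Qg] .
  show ha: "h \<alpha> = \<alpha>" using Q_inv_f(1)[OF Qg, of \<alpha>] g_props(2) by simp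
  show "\<And>y t. y \<in> C \<Longrightarrow> y (h t) = h (y t)" using comm_inv_gen[OF Q_bij[OF Qg]] g_props(5) by blast
  fix t assume t: "\<alpha> < t" "t < p"
  have "h \<alpha> < h t" using Q_inv_mono[OF Qg t(1)] .
  moreover have "h t < t"
  proof (rule ccontr)
    assume "\<not> h t < t"
    then have "g t \<le> g (h t)" using Q_mono_le[OF Qg] by simp
    then show False using Q_inv_f(2)[OF Qg, of t] g_props(4)[OF t] by simp
  qed
  ultimately show "\<alpha> < h t \<and> h t < t" using ha by simp
qed

lemma h_orbit: "\<alpha> < t \<Longrightarrow> t < p \<Longrightarrow> \<alpha> < (h ^^ n) t \<and> (h ^^ n) t \<le> t"
proof (induction n)
  case 0 then show ?case by simp
next
  case (Suc n)
  then have "\<alpha> < (h ^^ n) t" "(h ^^ n) t < p" by auto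
  then show ?case using h_props(3) Suc by force
qed

lemma g_orbit: "\<alpha> < t \<Longrightarrow> t < p \<Longrightarrow> t \<le> (g ^^ n) t \<and> (g ^^ n) t < p"
proof (induction n)
  case 0 then show ?case by simp
next
  case (Suc n)
  then have a: "\<alpha> < (g ^^ n) t" "(g ^^ n) t < p" by auto
  have "g ((g ^^ n) t) < g p" using g_mono a(2) .
  then show ?case using g_props(4)[OF a] g_props(3) Suc by force
qed

lemma orbit_down:
  assumes t0: "\<alpha> < t0" "t0 < p" and eps: "\<epsilon> > 0"
  shows "\<exists>n. (h ^^ n) t0 < \<alpha> + \<epsilon>"
proof (rule ccontr)
  assume "\<not> ?thesis"
  then have ge: "\<forall>n. \<alpha> + \<epsilon> \<le> (h ^^ n) t0" by (simp add: not_less)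
  define a where "a = (\<lambda>n. (h ^^ n) t0)"
  have bdd: "bdd_below (range a)" unfolding a_def using ge by (meson bdd_belowI2)
  define Lm where "Lm = Inf (range a)"
  have Lle: "Lm \<le> a n" for n unfolding Lm_def using bdd by (simp add: cINF_lower)
  have Lge: "\<alpha> + \<epsilon> \<le> Lm" unfolding Lm_def a_def using ge by (simp add: cINF_greatest)
  have "Lm \<le> t0" using Lle[of 0] unfolding a_def by simp
  then have Lin: "\<alpha> < Lm" "Lm < p" using Lge eps t0 by auto
  have hL: "h Lm < Lm" using h_props(3)[OF Lin] by simp
  obtain \<eta> l c where gm: "\<eta> > 0" "l \<in> L" "\<forall>w\<in>{Lm..Lm+\<eta>}. h w = l * w + c"
    using Q_right_germ[OF h_props(1), of Lm] Lin a0 p_r by force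
  have lp: "l > 0" using L_pos gm(2) by simp
  define \<kappa> where "\<kappa> = min \<eta> ((Lm - h Lm) / (2 * l))"
  have kp: "\<kappa> > 0" unfolding \<kappa>_def using gm(1) hL lp by simp
  have "Inf (range a) < Lm + \<kappa>" using kp unfolding Lm_def by simp
  then obtain n where n: "a n < Lm + \<kappa>" using cInf_less_iff[of "range a"] bdd by auto
  have an: "a n \<in> {Lm..Lm+\<eta>}" using n Lle[of n] unfolding \<kappa>_def by auto
  have hLm: "h Lm = l * Lm + c" using gm(3) gm(1) by simp
  have "h (a n) = h Lm + l * (a n - Lm)" using gm(3) an hLm by (simp add: algebra_simps)
  also have "l * (a n - Lm) \<le> l * \<kappa>" using n lp by simp
  then have "h Lm + l * (a n - Lm) \<le> h Lm + l * \<kappa>" by simp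
  also have "\<kappa> \<le> (Lm - h Lm) / (2 * l)" unfolding \<kappa>_def by (rule min.cobounded2)
  then have "l * \<kappa> \<le> l * ((Lm - h Lm) / (2 * l))" by (rule mult_left_mono) (use lp in auto)
  then have "h Lm + l * \<kappa> \<le> h Lm + (Lm - h Lm) / 2" using lp by simp
  finally have "h (a n) < Lm" using hL by (simp add: field_simps)
  moreover have "h (a n) = a (Suc n)" unfolding a_def by simp
  ultimately show False using Lle[of "Suc n"] by simp
qed

lemma orbit_up:
  assumes t0: "\<alpha> < t0" "t0 < p" and d: "d < p"
  shows "\<exists>n. d \<le> (g ^^ n) t0"
proof (rule ccontr)
  assume "\<not> ?thesis"
  then have lt: "\<forall>n. (g ^^ n) t0 < d" by (simp add: not_le)
  define a where "a = (\<lambda>n. (g ^^ n) t0)"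
  have bdd: "bdd_above (range a)" unfolding a_def using lt by (meson bdd_aboveI2 less_imp_le)
  define Lm where "Lm = Sup (range a)"
  have Lge: "a n \<le> Lm" for n unfolding Lm_def using bdd by (simp add: cSUP_upper)
  have Lle: "Lm \<le> d" unfolding Lm_def a_def using lt by (simp add: cSUP_least less_imp_le)
  have "t0 \<le> Lm" using Lge[of 0] unfolding a_def by simp
  then have Lin: "\<alpha> < Lm" "Lm < p" using Lle d t0 by auto
  have gL: "Lm < g Lm" using g_props(4)[OF Lin] by simp
  obtain \<eta> l c where gm: "\<eta> > 0" "l \<in> L" "\<forall>w\<in>{Lm-\<eta>..Lm}. g w = l * w + c"
    using Q_left_germ[OF g_props(1), of Lm] Lin a0 p_r by force
  have lp: "l > 0" using L_pos gm(2) by simp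
  define \<kappa> where "\<kappa> = min \<eta> ((g Lm - Lm) / (2 * l))"
  have kp: "\<kappa> > 0" unfolding \<kappa>_def using gm(1) gL lp by simp
  have "Lm - \<kappa> < Sup (range a)" using kp unfolding Lm_def by simp
  then obtain n where n: "Lm - \<kappa> < a n" using less_cSup_iff[of "range a"] bdd by auto
  have an: "a n \<in> {Lm-\<eta>..Lm}" using n Lge[of n] unfolding \<kappa>_def by auto
  have gLm: "g Lm = l * Lm + c" using gm(3) gm(1) by simp
  have eq: "g (a n) = g Lm - l * (Lm - a n)" using gm(3) an gLm by (simp add: algebra_simps)
  have "l * (Lm - a n) \<le> l * \<kappa>" using n lp by simp
  moreover have "\<kappa> \<le> (g Lm - Lm) / (2 * l)" unfolding \<kappa>_def by (rule min.cobounded2)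
  then have "l * \<kappa> \<le> l * ((g Lm - Lm) / (2 * l))" by (rule mult_left_mono) (use lp in auto)
  moreover have "l * ((g Lm - Lm) / (2 * l)) = (g Lm - Lm) / 2" using lp by simp
  ultimately have "g (a n) > Lm" using eq gL by simp
  moreover have "g (a n) = a (Suc n)" unfolding a_def by simp
  ultimately show False using Lge[of "Suc n"] by simp
qed

lemma y_above:
  assumes y: "y \<in> C" and s1: "sl y > 1" and t: "\<alpha> < t" "t < p"
  shows "y t > t"
proof (rule ccontr)
  assume "\<not> y t > t"
  then have yt: "y t \<le> t" by simp
  obtain \<delta> where d: "\<delta> > 0" "\<forall>w\<in>{\<alpha>..\<alpha>+\<delta>}. y w = \<alpha> + sl y * (w - \<alpha>)"
    using sl_prop(1)[OF C_G[OF y]] by blast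
  obtain n where n: "(h ^^ n) t < \<alpha> + \<delta>" using orbit_down[OF t d(1)] by blast
  define w where "w = (h ^^ n) t"
  have w: "\<alpha> < w" "w < \<alpha> + \<delta>" using h_orbit[OF t, of n] n unfolding w_def by auto
  have "y w = (h ^^ n) (y t)" unfolding w_def using funpow_comm[of y h n t] h_props(4)[OF y] by blast
  also have "\<dots> \<le> w" unfolding w_def using Q_funpow_mono[OF h_props(1) yt] .
  finally have "y w \<le> w" .
  moreover have "y w = \<alpha> + sl y * (w - \<alpha>)" using d(2) w by simp
  moreover have "1 * (w - \<alpha>) < sl y * (w - \<alpha>)" using s1 w(1) by (simp add: mult_less_cancel_right)
  ultimately show False by simp
qed

end

context main begin

lemma discrete: "\<exists>\<Delta>>1. \<forall>y\<in>C. \<not> (1 < sl y \<and> sl y \<le> \<Delta>)"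
proof -
  obtain lam e where le: "lam > 1" "\<alpha> < e" "e < p" "\<forall>w\<in>{\<alpha>..e}. g w = \<alpha> + lam * (w - \<alpha>)"
    using g_germ_alpha by blast
  obtain \<mu> d where md: "\<mu> < 1" "\<mu> > 0" "\<alpha> < d" "d < p" "\<forall>w\<in>{d..p}. g w = p + \<mu> * (w - p)"
    using g_germ_p by blast
  define t0 where "t0 = (\<alpha> + e) / 2"
  have t0: "\<alpha> < t0" "t0 < e" unfolding t0_def using le by auto
  obtain N where N: "d \<le> (g ^^ N) t0" using orbit_up[of t0 d] t0 le md by auto
  define F where "F = g ^^ N"
  have QF: "Q F" unfolding F_def using Q_funpow[OF g_props(1)] .
  obtain \<eta> b a where Fg: "\<eta> > 0" "b \<in> L" "\<forall>w\<in>{t0..t0+\<eta>}. F w = b * w + a"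
    using Q_right_germ[OF QF, of t0] t0 le a0 p_r by force
  have bp: "b > 0" using L_pos Fg(2) by simp
  define u2 where "u2 = t0 + min \<eta> (e - t0)"
  have "min \<eta> (e - t0) > 0" using Fg(1) t0 by simp
  moreover have "min \<eta> (e - t0) \<le> \<eta>" "min \<eta> (e - t0) \<le> e - t0" by (rule min.cobounded1, rule min.cobounded2)
  ultimately have u2: "t0 < u2" "u2 \<le> t0 + \<eta>" "u2 \<le> e" unfolding u2_def by linarith+
  define t2 where "t2 = (t0 + u2) / 2"
  have t2: "t0 < t2" "t2 < u2" unfolding t2_def using u2 by auto
  define K where "K = (u2 - \<alpha>) / (t2 - \<alpha>)"
  have K1: "K > 1" unfolding K_def using t2 t0 by (simp add: field_simps)
  define \<Delta> where "\<Delta> = min lam K"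
  have D1: "\<Delta> > 1" unfolding \<Delta>_def using K1 le by simp
  have "\<forall>y\<in>C. \<not> (1 < sl y \<and> sl y \<le> \<Delta>)"
  proof (intro ballI notI)
    fix y assume y: "y \<in> C" and sy: "1 < sl y \<and> sl y \<le> \<Delta>"
    define s where "s = sl y"
    have s: "1 < s" "s \<le> lam" "s \<le> K" using sy unfolding s_def \<Delta>_def by auto
    have ya: "\<forall>w\<in>{\<alpha>..e}. y w = \<alpha> + s * (w - \<alpha>)"
      using ext_alpha[OF le(1,2,3,4) y] s unfolding s_def by simp
    have yp: "y p = p" using C_fix_p[OF y] .
    obtain \<delta>' l' c' where yg: "\<delta>' > 0" "l' \<in> L" "\<forall>w\<in>{p-\<delta>'..p}. y w = l' * w + c'"
      using Q_left_germ[OF C_Q[OF y] p_r(2) p_r(1)] by blast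
    have c': "c' = p - l' * p" using yg(3) yg(1) yp by force
    have yg2: "\<forall>w\<in>{p-\<delta>'..p}. y w = p + l' * (w - p)" using yg(3) c' by (auto simp: algebra_simps)
    have l'0: "l' > 0" using L_pos yg(2) by simp
    define w0 where "w0 = p - min \<delta>' ((p - \<alpha>) / 2)"
    have pa: "p - \<alpha> > 0" "(p - \<alpha>)/2 < p - \<alpha>" using p_props(1) by simp_all
    have "min \<delta>' ((p - \<alpha>) / 2) > 0" using yg(1) pa by simp
    moreover have "min \<delta>' ((p - \<alpha>) / 2) \<le> \<delta>'" "min \<delta>' ((p - \<alpha>) / 2) \<le> (p - \<alpha>) / 2"
      by (rule min.cobounded1, rule min.cobounded2)
    ultimately have w0: "\<alpha> < w0" "w0 < p" "p - \<delta>' \<le> w0" unfolding w0_def using pa by linarith+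
    have "y w0 > w0" using y_above[OF y _ w0(1,2)] s unfolding s_def by simp
    moreover have "y w0 = p + l' * (w0 - p)" using yg2 w0 by simp
    ultimately have "l' * (p - w0) < 1 * (p - w0)" by (simp add: algebra_simps)
    then have l'1: "l' < 1" using w0 by (simp add: mult_less_cancel_right)
    have ypd: "\<forall>w\<in>{d..p}. y w = p + l' * (w - p)"
      using ext_p[OF md y yg(1) yg2 l'0] l'1 by simp
    have comm: "y (F t) = F (y t)" for t unfolding F_def using funpow_comm[of y g N t] g_props(5)[OF y] by blast
    have eqn: "b * (\<alpha> + s * (t - \<alpha>)) + a = p + l' * (b * t + a - p)" if t: "t0 \<le> t" "t \<le> t2" for t
    proof -
      have tt: "t \<in> {\<alpha>..e}" "t \<in> {t0..t0+\<eta>}" using t t0 t2 u2 by auto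
      have yt: "y t = \<alpha> + s * (t - \<alpha>)" using ya tt by simp
      have "s * (t - \<alpha>) \<ge> 1 * (t - \<alpha>)" using s t t0 by (intro mult_right_mono) auto
      then have yt1: "t \<le> y t" using yt by simp
      have "s * (t - \<alpha>) \<le> K * (t2 - \<alpha>)" using s t t0 K1 by (intro mult_mono) auto
      also have "K * (t2 - \<alpha>) = u2 - \<alpha>" unfolding K_def using t2 t0 by simp
      finally have yt2: "y t \<le> u2" using yt by simp
      have "y t \<in> {t0..t0+\<eta>}" using yt1 yt2 t u2 by auto
      then have Fyt: "F (y t) = b * (\<alpha> + s * (t - \<alpha>)) + a" using Fg(3) yt by simp
      have Ft: "F t = b * t + a" using Fg(3) tt by simp
      have "F t0 \<le> F t" using Q_mono_le[OF QF t(1)] .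
      then have Fd: "d \<le> F t" using N unfolding F_def by simp
      have "F t < p" unfolding F_def using g_orbit[of t N] t t0 tt le by auto
      then have "y (F t) = p + l' * (F t - p)" using ypd Fd by simp
      then show ?thesis using comm[of t] Fyt Ft by simp
    qed
    have e1: "b * (\<alpha> + s * (t0 - \<alpha>)) + a = p + l' * (b * t0 + a - p)" using eqn[of t0] t2 by simp
    have e2: "b * (\<alpha> + s * (t2 - \<alpha>)) + a = p + l' * (b * t2 + a - p)" using eqn[of t2] t2 by simp
    have "b * s * (t2 - t0) = l' * b * (t2 - t0)" using e1 e2 by (simp add: algebra_simps)
    then have "s = l'" using bp t2 by simp
    then show False using s l'1 by simp
  qed
  then show ?thesis using D1 by blast
qed

end

context main begin

lemma id_extend_right:
  assumes y: "y \<in> C" and q: "\<alpha> < q" "q < \<beta>" and idq: "\<forall>w\<in>{\<alpha>..q}. y w = w"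
  shows "\<exists>q'>q. q' \<le> \<beta> \<and> (\<forall>w\<in>{\<alpha>..q'}. y w = w)"
proof (cases "x q = q")
  case True
  have qA: "q \<notin> A" using x_nofixA[of q] q True by auto
  obtain \<eta> l c where yg: "\<eta> > 0" "l \<in> L" "\<forall>w\<in>{q-\<eta>..q+\<eta>}. y w = l * w + c"
    using Q_twosided_germ[OF C_Q[OF y] _ _ qA] q a0 br by force
  define m where "m = min \<eta> (q - \<alpha>)"
  have m: "m > 0" "m \<le> \<eta>" "m \<le> q - \<alpha>" unfolding m_def using yg q by auto
  have "y (q - m) = l * (q - m) + c" "y (q - m/2) = l * (q - m/2) + c" using yg(3) m by auto
  moreover have "y (q - m) = q - m" "y (q - m/2) = q - m/2" using idq m by auto
  ultimately have "l * (q - m) + c = q - m" "l * (q - m/2) + c = q - m/2" by auto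
  then have lc: "l = 1" "c = 0" using lin_two_pts m(1) by auto
  define q' where "q' = min (q + \<eta>) \<beta>"
  have q': "q < q'" "q' \<le> \<beta>" "q' \<le> q + \<eta>" unfolding q'_def using yg q by auto
  have "\<forall>w\<in>{\<alpha>..q'}. y w = w"
  proof
    fix w assume w: "w \<in> {\<alpha>..q'}"
    show "y w = w"
    proof (cases "w \<le> q")
      case True then show ?thesis using idq w by auto
    next
      case False then show ?thesis using yg(3) lc w q' by auto
    qed
  qed
  then show ?thesis using q' by blast
next
  case False
  define k where "k = (if x q < q then x else inv x)"
  have kprops: "Q k \<and> k q < q \<and> k \<alpha> = \<alpha> \<and> (\<forall>t. y (k t) = k (y t))"
  proof (cases "x q < q")
    case True
    then show ?thesis unfolding k_def using Qx G_alpha[OF xG] C_comm[OF y] by simp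
  next
    case False2: False
    then have "q < x q" using False by simp
    then have "inv x q < inv x (x q)" using Q_inv_mono[OF Qx] by blast
    then have "inv x q < q" using Q_inv_f(1)[OF Qx] by simp
    moreover have "inv x \<alpha> = \<alpha>" using Q_inv_f(1)[OF Qx, of \<alpha>] G_alpha[OF xG] by simp
    ultimately show ?thesis unfolding k_def using False2 Q_inv[OF Qx] C_comm_inv[OF y] by simp
  qed
  then have Qk: "Q k" and kq: "k q < q" and ka: "k \<alpha> = \<alpha>" and kc: "\<And>t. y (k t) = k (y t)" by auto
  obtain \<eta> l c where kg: "\<eta> > 0" "l \<in> L" "\<forall>w\<in>{q..q+\<eta>}. k w = l * w + c"
    using Q_right_germ[OF Qk, of q] q a0 br by force
  have lp: "l > 0" using L_pos kg(2) by simp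
  define \<kappa> where "\<kappa> = min \<eta> ((q - k q) / (2 * l))"
  have kp: "\<kappa> > 0" unfolding \<kappa>_def using kg(1) kq lp by simp
  have k1: "\<kappa> \<le> \<eta>" "\<kappa> \<le> (q - k q) / (2 * l)" unfolding \<kappa>_def by (rule min.cobounded1, rule min.cobounded2)
  have kqe: "k q = l * q + c" using kg(3) kg(1) by simp
  define q' where "q' = min (q + \<kappa>) \<beta>"
  have q': "q < q'" "q' \<le> \<beta>" "q' \<le> q + \<kappa>" unfolding q'_def using kp q by auto
  have "\<forall>w\<in>{\<alpha>..q'}. y w = w"
  proof
    fix w assume w: "w \<in> {\<alpha>..q'}"
    show "y w = w"
    proof (cases "w \<le> q")
      case True then show ?thesis using idq w by auto
    next
      case False
      then have wq: "q < w" "w \<le> q + \<kappa>" using w q' by auto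
      then have "k w = k q + l * (w - q)" using kg(3) kqe k1 by (auto simp: algebra_simps)
      moreover have "l * (w - q) \<le> l * ((q - k q) / (2 * l))"
        using wq k1 lp by (intro mult_left_mono) auto
      moreover have "2 * (l * ((q - k q) / (2 * l))) = q - k q" using lp by simp
      ultimately have kw1: "k w < q" using kq by linarith
      have "k \<alpha> < k w" using Q_mono[OF Qk] wq q by simp
      then have kw2: "\<alpha> < k w" using ka by simp
      have "y (k w) = k w" using idq kw1 kw2 by simp
      then have "k (y w) = k w" using kc by simp
      then show ?thesis using Q_mono[OF Qk] by (metis linorder_neqE_linordered_idom less_irrefl)
    qed
  qed
  then show ?thesis using q' by blast
qed

lemma sl_one_id:
  assumes y: "y \<in> C" and s1: "sl y = 1"
  shows "y = id"
proof -
  obtain \<delta> where d: "\<delta> > 0" "\<forall>w\<in>{\<alpha>..\<alpha>+\<delta>}. y w = \<alpha> + sl y * (w - \<alpha>)"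
    using sl_prop(1)[OF C_G[OF y]] by blast
  define Qs where "Qs = {t. \<alpha> \<le> t \<and> t \<le> \<beta> \<and> (\<forall>w\<in>{\<alpha>..t}. y w = w)}"
  define t1 where "t1 = \<alpha> + min \<delta> (\<beta> - \<alpha>)"
  have t1: "\<alpha> < t1" "t1 \<le> \<beta>" "t1 \<le> \<alpha> + \<delta>" unfolding t1_def using d ab by auto
  have t1Q: "t1 \<in> Qs" unfolding Qs_def using t1 d s1 by auto
  have bdd: "bdd_above Qs" unfolding Qs_def by (rule bdd_aboveI[of _ \<beta>]) auto
  define q where "q = Sup Qs"
  have upper: "t \<in> Qs \<Longrightarrow> t \<le> q" for t unfolding q_def using cSup_upper bdd by blast
  have qb: "q \<le> \<beta>" unfolding q_def using t1Q by (intro cSup_least) (auto simp: Qs_def)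
  have qa: "\<alpha> < q" using upper[OF t1Q] t1 by simp
  have below: "y w = w" if "\<alpha> \<le> w" "w < q" for w
  proof -
    have "w < Sup Qs" using that unfolding q_def by simp
    then obtain t where "t \<in> Qs" "w < t" using less_cSup_iff[of Qs w] bdd t1Q by blast
    then show ?thesis using that unfolding Qs_def by auto
  qed
  have "q = \<beta>"
  proof (rule ccontr)
    assume "q \<noteq> \<beta>"
    then have qlt: "q < \<beta>" using qb by simp
    obtain \<eta> l c where yg: "\<eta> > 0" "l \<in> L" "\<forall>w\<in>{q-\<eta>..q}. y w = l * w + c"
      using Q_left_germ[OF C_Q[OF y], of q] qa qlt a0 br by force
    define m where "m = min \<eta> (q - \<alpha>)"
    have m: "m > 0" "m \<le> \<eta>" "m \<le> q - \<alpha>" unfolding m_def using yg qa by auto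
    have "y (q - m) = l * (q - m) + c" "y (q - m/2) = l * (q - m/2) + c" using yg(3) m by auto
    moreover have "y (q - m) = q - m" "y (q - m/2) = q - m/2" using below m by auto
    ultimately have "l * (q - m) + c = q - m" "l * (q - m/2) + c = q - m/2" by auto
    then have lc: "l = 1" "c = 0" using lin_two_pts m(1) by auto
    have "y q = q" using yg(3) yg(1) lc by simp
    then have idq: "\<forall>w\<in>{\<alpha>..q}. y w = w" using below by (auto simp: order_le_less)
    obtain q' where q': "q' > q" "q' \<le> \<beta>" "\<forall>w\<in>{\<alpha>..q'}. y w = w"
      using id_extend_right[OF y qa qlt idq] by blast
    then have "q' \<in> Qs" unfolding Qs_def using qa by auto
    then show False using upper q' by fastforce
  qed
  show ?thesis
  proof
    fix w
    show "y w = id w"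
    proof (cases "w \<in> {\<alpha><..<\<beta>}")
      case True then show ?thesis using below \<open>q = \<beta>\<close> by simp
    next
      case False then show ?thesis using G_fix[OF C_G[OF y]] by simp
    qed
  qed
qed

end

context main begin

lemma C_pow: assumes "z \<in> C" shows "z ^^ n \<in> C \<and> sl (z ^^ n) = sl z ^ n"
proof (induction n)
  case 0
  have "z ^^ 0 = id" by (simp add: fun_eq_iff)
  then show ?case using C_id sl_id by (simp only:) simp
next
  case (Suc n)
  have e: "z ^^ Suc n = z \<circ> z ^^ n" by (simp only: funpow.simps(2))
  have "z \<circ> z ^^ n \<in> C" using C_comp[OF assms] Suc by blast
  moreover have "sl (z \<circ> z ^^ n) = sl z * sl (z ^^ n)" using sl_comp C_G assms Suc by blast
  ultimately show ?case unfolding e using Suc by (simp only: power_Suc)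
qed

lemma fpow_C: assumes "z \<in> C" shows "fpow z k \<in> C \<and> sl (fpow z k) = sl z powr (real_of_int k)"
proof -
  have sz: "sl z > 0" using sl_prop(3)[OF C_G[OF assms]] .
  show ?thesis
  proof (cases "0 \<le> k")
    case True
    then have f: "fpow z k = z ^^ nat k" unfolding fpow_def by simp
    have e: "real_of_int k = real (nat k)" using True by simp
    have "sl z powr real (nat k) = sl z ^ nat k" using sz by (rule powr_realpow)
    then have "sl z powr (real_of_int k) = sl z ^ nat k" unfolding e .
    then show ?thesis using C_pow[OF assms] f by simp
  next
    case False
    then have f: "fpow z k = (inv z) ^^ nat (-k)" unfolding fpow_def by simp
    have iz: "inv z \<in> C" using C_inv[OF assms] .
    have si: "sl (inv z) = inverse (sl z)" using sl_inv[OF C_G[OF assms]] .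
    have e: "real_of_int k = - real (nat (-k))" using False by simp
    have p1: "sl z powr real (nat (-k)) = sl z ^ nat (-k)" using sz by (rule powr_realpow)
    have "sl z powr (real_of_int k) = inverse (sl z powr real (nat (-k)))" unfolding e by (rule powr_minus)
    also have "\<dots> = inverse (sl z ^ nat (-k))" unfolding p1 ..
    also have "\<dots> = (inverse (sl z)) ^ nat (-k)" by (rule power_inverse[symmetric])
    finally show ?thesis using C_pow[OF iz] f si by simp
  qed
qed

lemma C_eq_of_sl:
  assumes "y \<in> C" "w \<in> C" "sl y = sl w"
  shows "y = w"
proof -
  have Qw: "Q w" using C_Q assms(2) by blast
  have z: "y \<circ> inv w \<in> C" using C_comp[OF assms(1) C_inv[OF assms(2)]] .
  have "sl (y \<circ> inv w) = sl y * inverse (sl w)"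
    using sl_comp[OF C_G[OF assms(1)] C_G[OF C_inv[OF assms(2)]]] sl_inv[OF C_G[OF assms(2)]] by simp
  also have "\<dots> = 1" using assms(3) sl_prop(3)[OF C_G[OF assms(2)]] by simp
  finally have "y \<circ> inv w = id" using sl_one_id[OF z] by blast
  then have "y (inv w (w t)) = w t" for t by (metis comp_apply id_apply)
  then show ?thesis using Q_inv_f(1)[OF Qw] by (simp add: fun_eq_iff)
qed

theorem main_cyclic: "cyclic_fun_group C"
proof (cases "\<forall>y\<in>C. sl y \<le> 1")
  case True
  have "\<forall>y\<in>C. y = id"
  proof
    fix y assume y: "y \<in> C"
    have "sl (inv y) \<le> 1" using True C_inv[OF y] by blast
    then have "inverse (sl y) \<le> 1" using sl_inv[OF C_G[OF y]] by simp
    then have "sl y \<ge> 1" using sl_prop(3)[OF C_G[OF y]] by (simp add: inverse_le_1_iff not_less)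
    then have "sl y = 1" using True y by (simp add: antisym)
    then show "y = id" using sl_one_id[OF y] by blast
  qed
  then have "C = {id}" using C_id by blast
  moreover have "fpow id k = id" for k
  proof -
    have "(id::real\<Rightarrow>real) ^^ n = id" for n by (induction n) auto
    moreover have "inv (id::real\<Rightarrow>real) = id" by (simp add: inv_id)
    ultimately show ?thesis unfolding fpow_def by simp
  qed
  ultimately have "C = range (fpow id)" by auto
  then show ?thesis unfolding cyclic_fun_group_def by blast
next
  case False
  then obtain y0 where y0: "y0 \<in> C" "sl y0 > 1" by force
  obtain \<Delta> where D: "\<Delta> > 1" "\<forall>y\<in>C. \<not> (1 < sl y \<and> sl y \<le> \<Delta>)" using discrete by blast
  define M where "M = sl ` {y\<in>C. sl y > 1}"
  have Mne: "M \<noteq> {}" unfolding M_def using y0 by blast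
  have Mgt: "s \<in> M \<Longrightarrow> \<Delta> < s" for s unfolding M_def using D by force
  have bdd: "bdd_below M" using Mgt by (meson bdd_belowI less_imp_le)
  define m where "m = Inf M"
  have mle: "s \<in> M \<Longrightarrow> m \<le> s" for s unfolding m_def using cInf_lower bdd by blast
  have mD: "\<Delta> \<le> m" unfolding m_def using Mne Mgt by (meson cInf_greatest less_imp_le)
  have m1: "m > 1" using mD D by simp
  have mM: "m \<in> M"
  proof (rule ccontr)
    assume nm: "m \<notin> M"
    have "m < m * \<Delta>" using m1 D by simp
    then obtain s1 where s1: "s1 \<in> M" "s1 < m * \<Delta>" using cInf_less_iff[OF Mne bdd] unfolding m_def by blast
    have "m < s1" using mle[OF s1(1)] nm s1(1) by (cases "m = s1") auto
    then obtain s2 where s2: "s2 \<in> M" "s2 < s1" using cInf_less_iff[OF Mne bdd] unfolding m_def by blast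
    have "m < s2" using mle[OF s2(1)] nm s2(1) by (cases "m = s2") auto
    obtain y1 where y1: "y1 \<in> C" "sl y1 = s1" using s1 unfolding M_def by blast
    obtain y2 where y2: "y2 \<in> C" "sl y2 = s2" using s2 unfolding M_def by blast
    have z: "y1 \<circ> inv y2 \<in> C" using C_comp[OF y1(1) C_inv[OF y2(1)]] .
    have sz: "sl (y1 \<circ> inv y2) = s1 / s2"
      using sl_comp[OF C_G[OF y1(1)] C_G[OF C_inv[OF y2(1)]]] sl_inv[OF C_G[OF y2(1)]] y1 y2
      by (simp add: divide_inverse)
    have s2p: "s2 > 0" using \<open>m < s2\<close> m1 by simp
    have "1 < s1 / s2" using s2 s2p by simp
    moreover have "s1 / s2 \<le> \<Delta>"
    proof -
      have "s1 < m * \<Delta>" using s1 by simp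
      also have "\<dots> \<le> s2 * \<Delta>" using \<open>m < s2\<close> D by simp
      finally show ?thesis using s2p by (simp add: divide_le_eq mult.commute)
    qed
    ultimately show False using D(2) z sz by auto
  qed
  then obtain g0 where g0: "g0 \<in> C" "sl g0 = m" unfolding M_def by blast
  have "C = range (fpow g0)"
  proof
    show "range (fpow g0) \<subseteq> C" using fpow_C[OF g0(1)] by blast
    show "C \<subseteq> range (fpow g0)"
    proof
      fix y assume y: "y \<in> C"
      define s where "s = sl y"
      have sp: "s > 0" unfolding s_def using sl_prop(3)[OF C_G[OF y]] .
      define k where "k = \<lfloor>log m s\<rfloor>"
      have k1: "real_of_int k \<le> log m s" "log m s < real_of_int k + 1" unfolding k_def by linarith+
      have lc: "m powr (log m s) = s" using m1 sp by simp
      have A1: "m powr (real_of_int k) \<le> s" using powr_mono[OF k1(1), of m] m1 lc by simp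
      have "s < m powr (real_of_int k + 1)" using powr_less_mono[OF k1(2), of m] m1 lc by simp
      then have A2: "s < m powr (real_of_int k) * m" using m1 by (simp add: powr_add)
      define w where "w = fpow g0 k"
      have w: "w \<in> C" "sl w = m powr (real_of_int k)" unfolding w_def using fpow_C[OF g0(1)] g0(2) by auto
      have mk: "m powr (real_of_int k) > 0" using m1 by simp
      have z: "y \<circ> inv w \<in> C" using C_comp[OF y C_inv[OF w(1)]] .
      have sz: "sl (y \<circ> inv w) = s / m powr (real_of_int k)"
        using sl_comp[OF C_G[OF y] C_G[OF C_inv[OF w(1)]]] sl_inv[OF C_G[OF w(1)]] w(2)
        unfolding s_def by (simp add: divide_inverse)
      have z1: "1 \<le> sl (y \<circ> inv w)" unfolding sz using A1 mk by simp
      have z2: "sl (y \<circ> inv w) < m" unfolding sz using A2 mk by (simp add: divide_less_eq mult.commute)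
      have "sl (y \<circ> inv w) = 1"
      proof (rule ccontr)
        assume "sl (y \<circ> inv w) \<noteq> 1"
        then have "sl (y \<circ> inv w) \<in> M" unfolding M_def using z z1 by force
        then show False using mle z2 by force
      qed
      then have "sl y = sl w"
        using sl_comp[OF C_G[OF y] C_G[OF C_inv[OF w(1)]]] sl_inv[OF C_G[OF w(1)]] w(2) mk
        by (simp add: field_simps)
      then have "y = w" using C_eq_of_sl[OF y w(1)] by blast
      then show "y \<in> range (fpow g0)" unfolding w_def by blast
    qed
  qed
  then show ?thesis unfolding cyclic_fun_group_def by blast
qed

end

theorem lemma4p2:
  fixes r :: real and L A :: "real set" and \<alpha> \<beta> :: real and x :: "real \<Rightarrow> real"
  assumes "std_params r L A"
    and "\<alpha> \<in> {0..r} \<inter> A" and "\<beta> \<in> {0..r} \<inter> A" and "\<alpha> < \<beta>"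
    and "x \<in> PLF_on r L A {\<alpha><..<\<beta>}"
    and "fixset r x \<inter> {\<alpha><..<\<beta>} \<inter> A = {}"
  shows "cyclic_fun_group (centralizer_in (PLF_on r L A {\<alpha><..<\<beta>}) x)"
proof -
  interpret main r L A \<alpha> \<beta> x
    using assms by unfold_locales auto
  show ?thesis using main_cyclic .
qed


end
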